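(* Let $X_3=FVP_3\cap FVK_3$. Then $$X_3\cong \mathbb Z^2 * \mathbb F_3 * \Gamma,$$ where $\mathbb F_3$ is a free group of rank $3$ and $\Gamma=\langle x,y,u,v,p,q\mid xy=uv,\ vu=pq,\ qp=yx\rangle$.
   Context: For $n\ge 2$, the flat virtual braid group $FVB_n$ is the group with generators $\sigma_1,\dots,\sigma_{n-1},\rho_1,\dots,\rho_{n-1}$ and defining relations: $\sigma_i^2=1$, $\rho_i^2=1$ for $1\le i\le n-1$; $\sigma_i\sigma_{i+1}\sigma_i=\sigma_{i+1}\sigma_i\sigma_{i+1}$, $\rho_i\rho_{i+1}\rho_i=\rho_{i+1}\rho_i\rho_{i+1}$ and $\rho_i\rho_{i+1}\sigma_i=\sigma_{i+1}\rho_i\rho_{i+1}$ for $1\le i\le n-2$; $\sigma_i\sigma_j=\sigma_j\sigma_i$, $\rho_i\rho_j=\rho_j\rho_i$ and $\rho_i\sigma_j=\sigma_j\rho_i$ for $|i-j|\ge 2$. Let $S_n=\langle\sigma_1,\dots,\sigma_{n-1}\rangle$ and $S_n'=\langle\rho_1,\dots,\rho_{n-1}\rangle$ in $FVB_n$. $\pi_n\colon FVB_n\to S_n$ is the homomorphism with $\pi_n(\sigma_i)=\pi_n(\rho_i)=\sigma_i$, and $FVP_n=\operatorname{Ker}\pi_n$. $\nu_n\colon FVB_n\to S_n'$ is the homomorphism with $\nu_n(\sigma_i)=1$, $\nu_n(\rho_i)=\rho_i$, and $FVK_n=\operatorname{Ker}\nu_n$. *)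

theory Defs
  imports "HOL-Algebra.Algebra"
begin

text \<open>A word over an alphabet of generators: a list of letters (g, True) = g, (g, False) = g^-1.\<close>
type_synonym 'g word = "('g \<times> bool) list"

definition words :: "'g set \<Rightarrow> 'g word set" where
  "words A = {w. fst ` set w \<subseteq> A}"

definition gen :: "'g \<Rightarrow> 'g word" where
  "gen g = [(g, True)]"

definition winv :: "'g word \<Rightarrow> 'g word" where
  "winv w = rev (map (\<lambda>(g, b). (g, \<not> b)) w)"

definition relation :: "'g word \<Rightarrow> 'g word \<Rightarrow> 'g word" where
  "relation l r = l @ winv r"

inductive pres_eq :: "'g set \<Rightarrow> 'g word set \<Rightarrow> 'g word \<Rightarrow> 'g word \<Rightarrow> bool"
  for A :: "'g set" and R :: "'g word set" where
  refl: "w \<in> words A \<Longrightarrow> pres_eq A R w w"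
| sym: "pres_eq A R u v \<Longrightarrow> pres_eq A R v u"
| trans: "pres_eq A R u v \<Longrightarrow> pres_eq A R v w \<Longrightarrow> pres_eq A R u w"
| cancel: "u \<in> words A \<Longrightarrow> v \<in> words A \<Longrightarrow> g \<in> A \<Longrightarrow>
           pres_eq A R (u @ [(g, b), (g, \<not> b)] @ v) (u @ v)"
| relator: "u \<in> words A \<Longrightarrow> v \<in> words A \<Longrightarrow> r \<in> R \<Longrightarrow> r \<in> words A \<Longrightarrow>
           pres_eq A R (u @ r @ v) (u @ v)"

definition pres_rel :: "'g set \<Rightarrow> 'g word set \<Rightarrow> ('g word \<times> 'g word) set" where
  "pres_rel A R = {(u, v). pres_eq A R u v}"

definition pres_class :: "'g set \<Rightarrow> 'g word set \<Rightarrow> 'g word \<Rightarrow> 'g word set" where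
  "pres_class A R w = pres_rel A R `` {w}"

definition presented_group :: "'g set \<Rightarrow> 'g word set \<Rightarrow> 'g word set monoid" where
  "presented_group A R =
     \<lparr> carrier = words A // pres_rel A R,
       monoid.mult = (\<lambda>S T. pres_class A R ((SOME s. s \<in> S) @ (SOME t. t \<in> T))),
       one = pres_class A R [] \<rparr>"

definition eval_word :: "('b, 'm) monoid_scheme \<Rightarrow> ('g \<Rightarrow> 'b) \<Rightarrow> 'g word \<Rightarrow> 'b" where
  "eval_word H f w =
     foldr (\<lambda>(g, b) acc. monoid.mult H (if b then f g else m_inv H (f g)) acc) w (monoid.one H)"

text \<open>The homomorphism < A | R > \<rightarrow> H determined by the images f of the generators
  (well defined whenever f respects the relators).\<close>
definition pres_lift :: "('b, 'm) monoid_scheme \<Rightarrow> ('g \<Rightarrow> 'b) \<Rightarrow> 'g word set \<Rightarrow> 'b" where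
  "pres_lift H f C = eval_word H f (SOME w. w \<in> C)"

datatype fvb_gen = Sig nat | Rho nat

definition fvb_gens :: "nat \<Rightarrow> fvb_gen set" where
  "fvb_gens n = {Sig i | i. 1 \<le> i \<and> i \<le> n - 1} \<union> {Rho i | i. 1 \<le> i \<and> i \<le> n - 1}"

definition fvb_rels :: "nat \<Rightarrow> fvb_gen word set" where
  "fvb_rels n =
     {relation (gen (Sig i) @ gen (Sig i)) [] | i. 1 \<le> i \<and> i \<le> n - 1}
   \<union> {relation (gen (Rho i) @ gen (Rho i)) [] | i. 1 \<le> i \<and> i \<le> n - 1}
   \<union> {relation (gen (Sig i) @ gen (Sig (i+1)) @ gen (Sig i))
               (gen (Sig (i+1)) @ gen (Sig i) @ gen (Sig (i+1))) | i. 1 \<le> i \<and> i \<le> n - 2}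
   \<union> {relation (gen (Rho i) @ gen (Rho (i+1)) @ gen (Rho i))
               (gen (Rho (i+1)) @ gen (Rho i) @ gen (Rho (i+1))) | i. 1 \<le> i \<and> i \<le> n - 2}
   \<union> {relation (gen (Rho i) @ gen (Rho (i+1)) @ gen (Sig i))
               (gen (Sig (i+1)) @ gen (Rho i) @ gen (Rho (i+1))) | i. 1 \<le> i \<and> i \<le> n - 2}
   \<union> {relation (gen (Sig i) @ gen (Sig j)) (gen (Sig j) @ gen (Sig i)) | i j.
        1 \<le> i \<and> i \<le> n - 1 \<and> 1 \<le> j \<and> j \<le> n - 1 \<and> (i + 2 \<le> j \<or> j + 2 \<le> i)}
   \<union> {relation (gen (Rho i) @ gen (Rho j)) (gen (Rho j) @ gen (Rho i)) | i j.
        1 \<le> i \<and> i \<le> n - 1 \<and> 1 \<le> j \<and> j \<le> n - 1 \<and> (i + 2 \<le> j \<or> j + 2 \<le> i)}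
   \<union> {relation (gen (Rho i) @ gen (Sig j)) (gen (Sig j) @ gen (Rho i)) | i j.
        1 \<le> i \<and> i \<le> n - 1 \<and> 1 \<le> j \<and> j \<le> n - 1 \<and> (i + 2 \<le> j \<or> j + 2 \<le> i)}"

definition FVB :: "nat \<Rightarrow> fvb_gen word set monoid" where
  "FVB n = presented_group (fvb_gens n) (fvb_rels n)"

text \<open>pi_n : FVB_n \<rightarrow> S_n = <sigma_i> \<subseteq> FVB_n, sigma_i, rho_i \<mapsto> sigma_i.\<close>
definition fvb_pi :: "nat \<Rightarrow> fvb_gen word set \<Rightarrow> fvb_gen word set" where
  "fvb_pi n = pres_lift (FVB n)
     (\<lambda>g. case g of Sig i \<Rightarrow> pres_class (fvb_gens n) (fvb_rels n) (gen (Sig i))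
                  | Rho i \<Rightarrow> pres_class (fvb_gens n) (fvb_rels n) (gen (Sig i)))"

text \<open>nu_n : FVB_n \<rightarrow> S_n' = <rho_i> \<subseteq> FVB_n, sigma_i \<mapsto> 1, rho_i \<mapsto> rho_i.\<close>
definition fvb_nu :: "nat \<Rightarrow> fvb_gen word set \<Rightarrow> fvb_gen word set" where
  "fvb_nu n = pres_lift (FVB n)
     (\<lambda>g. case g of Sig i \<Rightarrow> monoid.one (FVB n)
                  | Rho i \<Rightarrow> pres_class (fvb_gens n) (fvb_rels n) (gen (Rho i)))"

definition FVP :: "nat \<Rightarrow> fvb_gen word set set" where
  "FVP n = kernel (FVB n) (FVB n) (fvb_pi n)"

definition FVK :: "nat \<Rightarrow> fvb_gen word set set" where
  "FVK n = kernel (FVB n) (FVB n) (fvb_nu n)"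

text \<open>Generators: a, b for Z^2; f 0, f 1, f 2 for F_3; x, y, u, v, p, q for Gamma.
  The free product of presented groups is presented by the disjoint union of the
  generators and of the relators.\<close>
datatype tgt_gen = Ta | Tb | Tf nat | Tx | Ty | Tu | Tv | Tp | Tq

definition tgt_gens :: "tgt_gen set" where
  "tgt_gens = {Ta, Tb, Tf 0, Tf 1, Tf 2, Tx, Ty, Tu, Tv, Tp, Tq}"

definition tgt_rels :: "tgt_gen word set" where
  "tgt_rels =
    {relation (gen Ta @ gen Tb) (gen Tb @ gen Ta),
     relation (gen Tx @ gen Ty) (gen Tu @ gen Tv),
     relation (gen Tv @ gen Tu) (gen Tp @ gen Tq),
     relation (gen Tq @ gen Tp) (gen Ty @ gen Tx)}"

definition Z2_F3_Gamma :: "tgt_gen word set monoid" where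
  "Z2_F3_Gamma = presented_group tgt_gens tgt_rels"

end

theory Submission
  imports Defs
begin


lemma words_Nil[simp]: "[] \<in> words A" by (simp add: words_def)
lemma words_Cons[simp]: "(x # v \<in> words A) = (fst x \<in> A \<and> v \<in> words A)"
  by (auto simp: words_def)
lemma words_append[simp]: "(u @ v \<in> words A) = (u \<in> words A \<and> v \<in> words A)"
  by (auto simp: words_def)
lemma winv_Nil[simp]: "winv [] = []" by (simp add: winv_def)
lemma winv_Cons[simp]: "winv (x # u) = winv u @ [(fst x, \<not> snd x)]"
  by (cases x) (simp add: winv_def)
lemma winv_append[simp]: "winv (u @ v) = winv v @ winv u"
  by (simp add: winv_def)
lemma winv_winv[simp]: "winv (winv u) = u"
  by (induction u) auto
lemma winv_words[simp]: "(winv u \<in> words A) = (u \<in> words A)"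
  by (induction u) auto
lemma gen_words[simp]: "(gen g \<in> words A) = (g \<in> A)" by (simp add: gen_def)

lemma pres_eq_words: "pres_eq A R u v \<Longrightarrow> u \<in> words A \<and> v \<in> words A"
  by (induction rule: pres_eq.induct) auto

lemma pres_eq_left: "pres_eq A R u v \<Longrightarrow> w \<in> words A \<Longrightarrow> pres_eq A R (w @ u) (w @ v)"
proof (induction rule: pres_eq.induct)
  case (refl w') then show ?case by (simp add: pres_eq.refl)
next
  case (sym u v) then show ?case by (blast intro: pres_eq.sym)
next
  case (trans u v w') then show ?case by (blast intro: pres_eq.trans)
next
  case (cancel u v g b)
  then show ?case using pres_eq.cancel[of "w @ u" A v g R b] by simp
next
  case (relator u v r)
  then show ?case using pres_eq.relator[of "w @ u" A v r R] by simp
qed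

lemma pres_eq_right: "pres_eq A R u v \<Longrightarrow> w \<in> words A \<Longrightarrow> pres_eq A R (u @ w) (v @ w)"
proof (induction rule: pres_eq.induct)
  case (refl w') then show ?case by (simp add: pres_eq.refl)
next
  case (sym u v) then show ?case by (blast intro: pres_eq.sym)
next
  case (trans u v w') then show ?case by (blast intro: pres_eq.trans)
next
  case (cancel u v g b)
  then show ?case using pres_eq.cancel[of u A "v @ w" g R b] by simp
next
  case (relator u v r)
  then show ?case using pres_eq.relator[of u A "v @ w" r R] by simp
qed

lemma pres_eq_app: "pres_eq A R u u' \<Longrightarrow> pres_eq A R v v' \<Longrightarrow> pres_eq A R (u @ v) (u' @ v')"
  by (meson pres_eq.trans pres_eq_left pres_eq_right pres_eq_words)

lemma pres_eq_cancel_word: "u \<in> words A \<Longrightarrow> pres_eq A R (u @ winv u) []"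
proof (induction u)
  case Nil then show ?case by (simp add: pres_eq.refl)
next
  case (Cons x u)
  obtain g b where x: "x = (g, b)" by fastforce
  have gA: "g \<in> A" using Cons x by simp
  have "pres_eq A R ([x] @ (u @ winv u) @ [(g, \<not> b)]) ([x] @ [] @ [(g, \<not> b)])"
    by (rule pres_eq_left[OF pres_eq_right]) (use Cons x gA in auto)
  moreover have "pres_eq A R ([] @ [(g, b), (g, \<not> b)] @ []) ([] @ [])"
    by (rule pres_eq.cancel) (use gA in auto)
  ultimately show ?case using x by (auto intro: pres_eq.trans)
qed

lemma pres_eq_cancel_word': "u \<in> words A \<Longrightarrow> pres_eq A R (winv u @ u) []"
  using pres_eq_cancel_word[of "winv u" A R] by simp

lemma pres_eq_relator0: "r \<in> R \<Longrightarrow> r \<in> words A \<Longrightarrow> pres_eq A R r []"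
  using pres_eq.relator[of "[]" A "[]" r R] by simp

section \<open>The presented group\<close>

abbreviation cls where "cls A R w \<equiv> pres_class A R w"

lemma equiv_pres: "equiv (words A) (pres_rel A R)"
  unfolding equiv_def refl_on_def sym_def trans_def pres_rel_def
  by (auto intro: pres_eq.refl pres_eq.sym pres_eq.trans dest: pres_eq_words)

lemma cls_eq_iff: "u \<in> words A \<Longrightarrow> v \<in> words A \<Longrightarrow> (cls A R u = cls A R v) = pres_eq A R u v"
  unfolding pres_class_def
  using eq_equiv_class_iff[OF equiv_pres, of u A v R] by (simp add: pres_rel_def)

lemma in_cls: "w \<in> cls A R u \<longleftrightarrow> pres_eq A R u w"
  by (simp add: pres_class_def pres_rel_def)

lemma carrier_PG: "carrier (presented_group A R) = cls A R ` words A"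
  by (auto simp: presented_group_def quotient_def pres_class_def)

lemma one_PG: "\<one>\<^bsub>presented_group A R\<^esub> = cls A R []"
  by (simp add: presented_group_def)

lemma some_cls: "u \<in> words A \<Longrightarrow> pres_eq A R u (SOME s. s \<in> cls A R u)"
proof -
  assume u: "u \<in> words A"
  have "u \<in> cls A R u" using u by (simp add: in_cls pres_eq.refl)
  then have "(SOME s. s \<in> cls A R u) \<in> cls A R u" by (rule someI)
  then show ?thesis by (simp add: in_cls)
qed

lemma mult_PG: "u \<in> words A \<Longrightarrow> v \<in> words A \<Longrightarrow>
  cls A R u \<otimes>\<^bsub>presented_group A R\<^esub> cls A R v = cls A R (u @ v)"
proof -
  assume u: "u \<in> words A" and v: "v \<in> words A"
  have pe: "pres_eq A R (u @ v) ((SOME s. s \<in> cls A R u) @ (SOME s. s \<in> cls A R v))"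
    by (rule pres_eq_app) (use some_cls u v in auto)
  have "cls A R ((SOME s. s \<in> cls A R u) @ (SOME s. s \<in> cls A R v)) = cls A R (u @ v)"
    using pe pres_eq_words[OF pe] by (subst cls_eq_iff) (auto intro: pres_eq.sym)
  then show ?thesis by (simp add: presented_group_def)
qed

lemma group_PG: "group (presented_group A R)"
proof (rule groupI)
  fix x y assume "x \<in> carrier (presented_group A R)" "y \<in> carrier (presented_group A R)"
  then show "x \<otimes>\<^bsub>presented_group A R\<^esub> y \<in> carrier (presented_group A R)"
    by (auto simp: carrier_PG mult_PG)
next
  show "\<one>\<^bsub>presented_group A R\<^esub> \<in> carrier (presented_group A R)"
    by (auto simp: carrier_PG one_PG)
next
  fix x y z assume "x \<in> carrier (presented_group A R)" "y \<in> carrier (presented_group A R)"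
    "z \<in> carrier (presented_group A R)"
  then show "x \<otimes>\<^bsub>presented_group A R\<^esub> y \<otimes>\<^bsub>presented_group A R\<^esub> z =
     x \<otimes>\<^bsub>presented_group A R\<^esub> (y \<otimes>\<^bsub>presented_group A R\<^esub> z)"
    by (auto simp: carrier_PG mult_PG)
next
  fix x assume "x \<in> carrier (presented_group A R)"
  then show "\<one>\<^bsub>presented_group A R\<^esub> \<otimes>\<^bsub>presented_group A R\<^esub> x = x"
    by (auto simp: carrier_PG mult_PG one_PG)
next
  fix x assume "x \<in> carrier (presented_group A R)"
  then obtain u where u: "u \<in> words A" "x = cls A R u" by (auto simp: carrier_PG)
  have "cls A R (winv u) \<otimes>\<^bsub>presented_group A R\<^esub> x = cls A R []"
    using u by (simp add: mult_PG cls_eq_iff pres_eq_cancel_word')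
  then show "\<exists>y\<in>carrier (presented_group A R). y \<otimes>\<^bsub>presented_group A R\<^esub> x = \<one>\<^bsub>presented_group A R\<^esub>"
    using u by (auto simp: carrier_PG one_PG)
qed

lemma cls_carrier: "w \<in> words A \<Longrightarrow> cls A R w \<in> carrier (presented_group A R)"
  by (simp add: carrier_PG)

lemma inv_PG: "u \<in> words A \<Longrightarrow> inv\<^bsub>presented_group A R\<^esub> (cls A R u) = cls A R (winv u)"
  by (rule group.inv_equality[OF group_PG])
     (auto simp: mult_PG one_PG cls_carrier cls_eq_iff pres_eq_cancel_word')

definition letok :: "('b,'m) monoid_scheme \<Rightarrow> ('g \<Rightarrow> 'b) \<Rightarrow> 'g word \<Rightarrow> bool" where
  "letok H f w = (\<forall>x\<in>set w. f (fst x) \<in> carrier H)"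

lemma letok_simps[simp]: "letok H f []" "letok H f (x # w) = (f (fst x) \<in> carrier H \<and> letok H f w)"
  "letok H f (u @ w) = (letok H f u \<and> letok H f w)" "letok H f (winv w) = letok H f w"
  by (auto simp: letok_def winv_def)

lemma eval_Nil[simp]: "eval_word H f [] = \<one>\<^bsub>H\<^esub>" by (simp add: eval_word_def)
lemma eval_Cons: "eval_word H f ((g, b) # w) =
  (if b then f g else inv\<^bsub>H\<^esub> (f g)) \<otimes>\<^bsub>H\<^esub> eval_word H f w"
  by (simp add: eval_word_def)

context group begin

lemma eval_closed[simp]: "letok G f w \<Longrightarrow> eval_word G f w \<in> carrier G"
  by (induction w) (auto simp: eval_Cons)

lemma eval_append: "letok G f u \<Longrightarrow> letok G f v \<Longrightarrow>
  eval_word G f (u @ v) = eval_word G f u \<otimes> eval_word G f v"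
  by (induction u) (auto simp: eval_Cons m_assoc)

lemma eval_single: "f g \<in> carrier G \<Longrightarrow> eval_word G f [(g, b)] = (if b then f g else inv (f g))"
  by (simp add: eval_Cons)

lemma eval_winv: "letok G f u \<Longrightarrow> eval_word G f (winv u) = inv (eval_word G f u)"
proof (induction u)
  case Nil then show ?case by simp
next
  case (Cons x u)
  obtain g b where x: "x = (g, b)" by fastforce
  show ?case using Cons x
    by (auto simp: eval_append eval_Cons inv_mult_group)
qed

end

section \<open>Free reduction\<close>

fun fr_step :: "'g word \<Rightarrow> ('g \<times> bool) \<Rightarrow> 'g word" where
  "fr_step [] x = [x]"
| "fr_step (y # ys) x = (if fst y = fst x \<and> snd y = (\<not> snd x) then ys else x # y # ys)"

definition freered :: "'g word \<Rightarrow> 'g word" where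
  "freered w = rev (foldl fr_step [] w)"

lemma set_fr_step: "set (fr_step acc x) \<subseteq> insert x (set acc)"
  by (cases acc) auto

lemma set_foldl_fr: "set (foldl fr_step acc w) \<subseteq> set acc \<union> set w"
proof (induction w arbitrary: acc)
  case Nil then show ?case by simp
next
  case (Cons x w) then show ?case using set_fr_step[of acc x] by fastforce
qed

lemma (in group) eval_pair: "f g \<in> carrier G \<Longrightarrow> letok G f w \<Longrightarrow>
  eval_word G f ((g, b) # (g, \<not> b) # w) = eval_word G f w"
  by (cases b) (simp_all add: eval_Cons m_assoc[symmetric])

lemma (in group) eval_fr_step: "letok G f acc \<Longrightarrow> letok G f [x] \<Longrightarrow> letok G f w \<Longrightarrow>
  eval_word G f (rev (fr_step acc x) @ w) = eval_word G f (rev acc @ x # w)"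
proof (cases acc)
  case Nil then show ?thesis by simp
next
  case (Cons y ys)
  assume ok: "letok G f acc" "letok G f [x]" "letok G f w"
  obtain g b where x: "x = (g,b)" by fastforce
  obtain h c where y: "y = (h,c)" by fastforce
  show ?thesis
  proof (cases "h = g \<and> c = (\<not> b)")
    case True
    have fg: "f g \<in> carrier G" using ok x by simp
    have okys: "letok G f (rev ys)" using ok Cons by (simp add: letok_def)
    have "eval_word G f ([y] @ [x] @ w) = eval_word G f w"
      using ok True x y fg eval_pair[of f h w c] by auto
    then have "eval_word G f (rev ys @ ([y] @ [x] @ w)) = eval_word G f (rev ys @ w)"
      using ok okys x y fg True by (simp add: eval_append)
    then show ?thesis using Cons True x y by simp
  next
    case False
    have "fr_step acc x = x # y # ys" using Cons x y False by auto
    then show ?thesis using Cons by simp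
  qed
qed

lemma (in group) eval_foldl_fr: "letok G f acc \<Longrightarrow> letok G f w \<Longrightarrow>
  eval_word G f (rev (foldl fr_step acc w)) = eval_word G f (rev acc @ w)"
proof (induction w arbitrary: acc)
  case Nil then show ?case by simp
next
  case (Cons x w)
  have ok: "letok G f (fr_step acc x)"
    using set_fr_step[of acc x] Cons.prems by (auto simp: letok_def)
  have "eval_word G f (rev (foldl fr_step acc (x # w))) = eval_word G f (rev (fr_step acc x) @ w)"
    using Cons.IH[OF ok] Cons.prems by simp
  also have "\<dots> = eval_word G f (rev acc @ x # w)"
    using Cons.prems by (intro eval_fr_step) auto
  finally show ?case .
qed

lemma (in group) eval_freered: "letok G f w \<Longrightarrow> eval_word G f (freered w) = eval_word G f w"
  unfolding freered_def using eval_foldl_fr[of f "[]" w] by simp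

definition substw :: "('a \<Rightarrow> 'b word) \<Rightarrow> 'a word \<Rightarrow> 'b word" where
  "substw m w = concat (map (\<lambda>(x, b). if b then m x else winv (m x)) w)"

lemma substw_simps[simp]: "substw m [] = []"
  "substw m ((x, b) # w) = (if b then m x else winv (m x)) @ substw m w"
  "substw m (u @ v) = substw m u @ substw m v"
  by (auto simp: substw_def)

lemma substw_winv[simp]: "substw m (winv w) = winv (substw m w)"
  by (induction w) auto

lemma substw_substw: "substw m1 (substw m2 w) = substw (\<lambda>x. substw m1 (m2 x)) w"
  by (induction w) auto

lemma (in group) eval_substw: "(\<And>x. x \<in> fst ` set w \<Longrightarrow> letok G f (m x)) \<Longrightarrow>
  eval_word G f (substw m w) = eval_word G (\<lambda>x. eval_word G f (m x)) w"
proof (induction w)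
  case Nil then show ?case by simp
next
  case (Cons y w)
  obtain x b where y: "y = (x, b)" by fastforce
  have ok: "letok G f (m x)" "\<And>z. z \<in> fst ` set w \<Longrightarrow> letok G f (m z)"
    using Cons.prems y by auto
  have okw: "letok G f (substw m w)"
    using ok(2) by (induction w) (auto split: if_splits)
  show ?case using Cons.IH[OF ok(2)] ok okw y
    by (simp add: eval_append eval_winv eval_Cons)
qed

section \<open>Universal property\<close>

lemma substw_words: "(\<And>x. x \<in> fst ` set w \<Longrightarrow> m x \<in> words A) \<Longrightarrow> substw m w \<in> words A"
  by (induction w) auto

lemma eval_cls_subst: "(\<And>x. x \<in> fst ` set w \<Longrightarrow> m x \<in> words A) \<Longrightarrow>
  eval_word (presented_group A R) (\<lambda>g. cls A R (m g)) w = cls A R (substw m w)"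
proof (induction w)
  case Nil then show ?case by (simp add: one_PG)
next
  case (Cons y w)
  obtain x b where y: "y = (x, b)" by fastforce
  have mx: "m x \<in> words A" using Cons.prems y by auto
  have sw: "substw m w \<in> words A" using Cons.prems by (intro substw_words) auto
  show ?case using Cons y mx sw
    by (auto simp: eval_Cons inv_PG mult_PG)
qed

lemma eval_cls_gen: "w \<in> words A \<Longrightarrow>
  eval_word (presented_group A R) (\<lambda>g. cls A R (gen g)) w = cls A R w"
proof -
  assume w: "w \<in> words A"
  have "substw gen w = w" by (induction w) (auto simp: gen_def)
  moreover have "\<And>x. x \<in> fst ` set w \<Longrightarrow> gen x \<in> words A" using w by (auto simp: words_def gen_def)
  ultimately show ?thesis using eval_cls_subst[of w gen A R] by simp
qed

definition resp :: "('b,'m) monoid_scheme \<Rightarrow> ('g \<Rightarrow> 'b) \<Rightarrow> 'g set \<Rightarrow> 'g word set \<Rightarrow> bool" where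
  "resp H f A R = ((\<forall>g\<in>A. f g \<in> carrier H) \<and> (\<forall>r\<in>R. r \<in> words A \<longrightarrow> eval_word H f r = \<one>\<^bsub>H\<^esub>))"

lemma letok_words: "(\<forall>g\<in>A. f g \<in> carrier H) \<Longrightarrow> w \<in> words A \<Longrightarrow> letok H f w"
  by (auto simp: letok_def words_def)

lemma (in group) eval_pres_eq:
  assumes "resp G f A R" "pres_eq A R u v"
  shows "eval_word G f u = eval_word G f v"
  using assms(2)
proof (induction rule: pres_eq.induct)
  case (cancel u v g b)
  have ok: "letok G f u" "letok G f v" "f g \<in> carrier G"
    using cancel assms(1) by (auto simp: resp_def intro: letok_words)
  then show ?case by (simp add: eval_append eval_pair)
next
  case (relator u v r)
  have ok: "letok G f u" "letok G f v" "letok G f r"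
    using relator assms(1) by (auto simp: resp_def intro: letok_words)
  have "eval_word G f r = \<one>" using relator assms(1) by (auto simp: resp_def)
  then show ?case using ok by (simp add: eval_append)
qed auto

lemma (in group) pres_lift_cls:
  assumes "resp G f A R" "w \<in> words A"
  shows "pres_lift G f (cls A R w) = eval_word G f w"
  unfolding pres_lift_def
  using eval_pres_eq[OF assms(1) some_cls[OF assms(2)]] by simp

lemma (in group) pres_lift_hom:
  assumes "resp G f A R"
  shows "pres_lift G f \<in> hom (presented_group A R) G"
proof (rule homI)
  fix x assume "x \<in> carrier (presented_group A R)"
  then obtain u where "u \<in> words A" "x = cls A R u" by (auto simp: carrier_PG)
  then show "pres_lift G f x \<in> carrier G"
    using assms eval_closed[OF letok_words[of A f G u]] by (auto simp: pres_lift_cls resp_def)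
next
  fix x y assume "x \<in> carrier (presented_group A R)" "y \<in> carrier (presented_group A R)"
  then obtain u v where "u \<in> words A" "x = cls A R u" "v \<in> words A" "y = cls A R v"
    by (auto simp: carrier_PG)
  then show "pres_lift G f (x \<otimes>\<^bsub>presented_group A R\<^esub> y) = pres_lift G f x \<otimes> pres_lift G f y"
    using assms eval_append[OF letok_words[of A f G u] letok_words[of A f G v]] by (auto simp: mult_PG pres_lift_cls resp_def)
qed

lemma hom_eval:
  assumes "group G" "group H" "h \<in> hom G H" "letok G f w"
  shows "h (eval_word G f w) = eval_word H (h \<circ> f) w"
  using assms(4)
proof (induction w)
  case Nil then show ?case using assms by (simp add: hom_one)
next
  case (Cons y w)
  obtain x b where y: "y = (x, b)" by fastforce
  interpret gh: group_hom G H h using assms by (simp add: group_hom_def group_hom_axioms_def)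
  show ?case using Cons y
    by (auto simp: eval_Cons gh.hom_mult group.eval_closed[OF assms(1)])
qed

section \<open>Certificates\<close>

definition prodcert :: "('g word \<times> 'g word \<times> bool) list \<Rightarrow> 'g word" where
  "prodcert cs = concat (map (\<lambda>(c, r, s). c @ (if s then r else winv r) @ winv c) cs)"

lemma prodcert_simps[simp]: "prodcert [] = []"
  "prodcert ((c, r, s) # cs) = c @ (if s then r else winv r) @ winv c @ prodcert cs"
  by (auto simp: prodcert_def)

lemma (in group) eval_prodcert:
  assumes "\<forall>(c, r, s) \<in> set cs. letok G f c \<and> letok G f r \<and> eval_word G f r = \<one>"
  shows "eval_word G f (prodcert cs) = \<one> \<and> letok G f (prodcert cs)"
  using assms
proof (induction cs)
  case Nil then show ?case by simp
next
  case (Cons a cs)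
  obtain c r s where a: "a = (c, r, s)" by (cases a) auto
  show ?case using Cons a
    by (auto simp: eval_append eval_winv)
qed

lemma (in group) cert_trivial:
  assumes "\<forall>(c, r, s) \<in> set cs. letok G f c \<and> letok G f r \<and> eval_word G f r = \<one>"
    "letok G f w" "freered w = freered (prodcert cs)"
  shows "eval_word G f w = \<one>"
  using eval_prodcert[OF assms(1)] assms(2,3) eval_freered
  by metis

lemma pg_cert:
  assumes w: "w \<in> words A" and cs: "\<forall>(c, r, s) \<in> set cs. c \<in> words A \<and> r \<in> R \<and> r \<in> words A"
    and eq: "freered w = freered (prodcert cs)"
  shows "pres_eq A R w []"
proof -
  interpret G: group "presented_group A R" by (rule group_PG)
  let ?f = "\<lambda>g. cls A R (gen g)"
  have fc: "\<forall>g\<in>A. ?f g \<in> carrier (presented_group A R)" by (simp add: cls_carrier)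
  have "eval_word (presented_group A R) ?f w = \<one>\<^bsub>presented_group A R\<^esub>"
  proof (rule G.cert_trivial[OF _ letok_words[OF fc w] eq])
    show "\<forall>(c, r, s)\<in>set cs. letok (presented_group A R) ?f c \<and> letok (presented_group A R) ?f r \<and>
        eval_word (presented_group A R) ?f r = \<one>\<^bsub>presented_group A R\<^esub>"
    proof (clarify)
      fix c r s assume "(c, r, s) \<in> set cs"
      then have c: "c \<in> words A" and r: "r \<in> R" "r \<in> words A" using cs by auto
      have "eval_word (presented_group A R) ?f r = cls A R []"
        using r by (simp add: eval_cls_gen cls_eq_iff pres_eq_relator0)
      then show "letok (presented_group A R) ?f c \<and> letok (presented_group A R) ?f r \<and>
        eval_word (presented_group A R) ?f r = \<one>\<^bsub>presented_group A R\<^esub>"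
        using letok_words[OF fc c] letok_words[OF fc r(2)] by (simp add: one_PG)
    qed
  qed
  then have "cls A R w = cls A R []" using w by (simp add: eval_cls_gen one_PG)
  then show ?thesis using w by (simp add: cls_eq_iff)
qed

lemma pres_eq_mid: "pres_eq A R m [] \<Longrightarrow> x \<in> words A \<Longrightarrow> z \<in> words A \<Longrightarrow>
  pres_eq A R (x @ m @ z) (x @ z)"
  using pres_eq_left[OF pres_eq_right[of A R m "[]" z] , of x] by simp

lemma pres_eq_from_triv:
  assumes "pres_eq A R (u @ winv v) []" "u \<in> words A" "v \<in> words A"
  shows "pres_eq A R u v"
proof -
  have 1: "pres_eq A R (u @ winv v @ v) ([] @ v)"
    using pres_eq_right[OF assms(1), of v] assms by simp
  have 2: "pres_eq A R (u @ winv v @ v) (u @ [])"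
    using pres_eq_mid[OF pres_eq_cancel_word'[OF assms(3)], of u "[]"] assms by simp
  show ?thesis using 1 2 by (auto intro: pres_eq.sym pres_eq.trans)
qed


lemma eval_cong: "(\<And>x. x \<in> set w \<Longrightarrow> f (fst x) = f' (fst x)) \<Longrightarrow> eval_word H f w = eval_word H f' w"
proof (induction w)
  case (Cons y w)
  obtain g b where y: "y = (g, b)" by fastforce
  have "f g = f' g" using Cons.prems[of "(g, b)"] y by simp
  then show ?case using Cons y by (simp add: eval_Cons)
qed (simp add: eval_word_def)

lemma (in group) solve_mid:
  assumes "a \<in> carrier G" "x \<in> carrier G" "c \<in> carrier G" "a \<otimes> x \<otimes> c = \<one>"
  shows "x = inv a \<otimes> inv c"
proof -
  have "a \<otimes> (x \<otimes> c) = \<one>" using assms by (simp add: m_assoc)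
  then have "inv (x \<otimes> c) = a" using assms by (intro inv_equality) auto
  then have "x \<otimes> c = inv a" using assms by (metis inv_inv m_closed)
  then show ?thesis using assms by (metis inv_closed inv_solve_right)
qed

lemma (in group) eval_in_subgroup:
  assumes "subgroup H G" "\<forall>x\<in>set w. f (fst x) \<in> H"
  shows "eval_word G f w \<in> H"
  using assms(2)
proof (induction w)
  case Nil then show ?case using assms(1) by (simp add: subgroup.one_closed)
next
  case (Cons y w)
  obtain g b where y: "y = (g, b)" by fastforce
  then show ?case using Cons assms(1)
    by (auto simp: eval_Cons subgroup.m_closed subgroup.m_inv_closed)
qed



datatype s3 = E0 | E1 | E2 | E3 | E4 | E5
datatype g4 = GS1 | GS2 | GR1 | GR2
type_synonym sym = "(s3 \<times> s3) \<times> g4"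

definition m3 :: "s3 \<Rightarrow> s3 \<Rightarrow> s3" where
  "m3 p q = (case p of E0 \<Rightarrow> (case q of E0 \<Rightarrow> E0 | E1 \<Rightarrow> E1 | E2 \<Rightarrow> E2 | E3 \<Rightarrow> E3 | E4 \<Rightarrow> E4 | E5 \<Rightarrow> E5) | E1 \<Rightarrow> (case q of E0 \<Rightarrow> E1 | E1 \<Rightarrow> E0 | E2 \<Rightarrow> E3 | E3 \<Rightarrow> E2 | E4 \<Rightarrow> E5 | E5 \<Rightarrow> E4) | E2 \<Rightarrow> (case q of E0 \<Rightarrow> E2 | E1 \<Rightarrow> E4 | E2 \<Rightarrow> E0 | E3 \<Rightarrow> E5 | E4 \<Rightarrow> E1 | E5 \<Rightarrow> E3) | E3 \<Rightarrow> (case q of E0 \<Rightarrow> E3 | E1 \<Rightarrow> E5 | E2 \<Rightarrow> E1 | E3 \<Rightarrow> E4 | E4 \<Rightarrow> E0 | E5 \<Rightarrow> E2) | E4 \<Rightarrow> (case q of E0 \<Rightarrow> E4 | E1 \<Rightarrow> E2 | E2 \<Rightarrow> E5 | E3 \<Rightarrow> E0 | E4 \<Rightarrow> E3 | E5 \<Rightarrow> E1) | E5 \<Rightarrow> (case q of E0 \<Rightarrow> E5 | E1 \<Rightarrow> E3 | E2 \<Rightarrow> E4 | E3 \<Rightarrow> E1 | E4 \<Rightarrow> E2 | E5 \<Rightarrow> E0))"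

definition sg :: "nat \<Rightarrow> s3" where
  "sg i = (if i = 1 then E1 else E2)"

definition nfL :: "s3 \<Rightarrow> nat list" where
  "nfL p = (case p of E0 \<Rightarrow> [] | E1 \<Rightarrow> [1] | E2 \<Rightarrow> [2] | E3 \<Rightarrow> [1, 2] | E4 \<Rightarrow> [2, 1] | E5 \<Rightarrow> [1, 2, 1])"

definition cosL :: "(s3 \<times> s3) list" where
  "cosL = [(E0, E0), (E0, E1), (E0, E2), (E0, E3), (E0, E4), (E0, E5), (E1, E0), (E1, E1), (E1, E2), (E1, E3), (E1, E4), (E1, E5), (E2, E0), (E2, E1), (E2, E2), (E2, E3), (E2, E4), (E2, E5), (E3, E0), (E3, E1), (E3, E2), (E3, E3), (E3, E4), (E3, E5), (E4, E0), (E4, E1), (E4, E2), (E4, E3), (E4, E4), (E4, E5), (E5, E0), (E5, E1), (E5, E2), (E5, E3), (E5, E4), (E5, E5)]"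

definition symL :: "sym list" where
  "symL = [((E0, E0), GS1), ((E0, E0), GS2), ((E0, E0), GR1), ((E0, E0), GR2), ((E0, E1), GS1), ((E0, E1), GS2), ((E0, E1), GR1), ((E0, E1), GR2), ((E0, E2), GS1), ((E0, E2), GS2), ((E0, E2), GR1), ((E0, E2), GR2), ((E0, E3), GS1), ((E0, E3), GS2), ((E0, E3), GR1), ((E0, E3), GR2), ((E0, E4), GS1), ((E0, E4), GS2), ((E0, E4), GR1), ((E0, E4), GR2), ((E0, E5), GS1), ((E0, E5), GS2), ((E0, E5), GR1), ((E0, E5), GR2), ((E1, E0), GS1), ((E1, E0), GS2), ((E1, E0), GR1), ((E1, E0), GR2), ((E1, E1), GS1), ((E1, E1), GS2), ((E1, E1), GR1), ((E1, E1), GR2), ((E1, E2), GS1), ((E1, E2), GS2), ((E1, E2), GR1), ((E1, E2), GR2), ((E1, E3), GS1), ((E1, E3), GS2), ((E1, E3), GR1), ((E1, E3), GR2), ((E1, E4), GS1), ((E1, E4), GS2), ((E1, E4), GR1), ((E1, E4), GR2), ((E1, E5), GS1), ((E1, E5), GS2), ((E1, E5), GR1), ((E1, E5), GR2), ((E2, E0), GS1), ((E2, E0), GS2), ((E2, E0), GR1), ((E2, E0), GR2), ((E2, E1), GS1), ((E2, E1), GS2), ((E2, E1), GR1), ((E2, E1), GR2), ((E2, E2), GS1), ((E2, E2), GS2), ((E2, E2), GR1), ((E2, E2), GR2), ((E2, E3), GS1), ((E2, E3), GS2), ((E2, E3), GR1), ((E2, E3), GR2), ((E2, E4), GS1), ((E2,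 E4), GS2), ((E2, E4), GR1), ((E2, E4), GR2), ((E2, E5), GS1), ((E2, E5), GS2), ((E2, E5), GR1), ((E2, E5), GR2), ((E3, E0), GS1), ((E3, E0), GS2), ((E3, E0), GR1), ((E3, E0), GR2), ((E3, E1), GS1), ((E3, E1), GS2), ((E3, E1), GR1), ((E3, E1), GR2), ((E3, E2), GS1), ((E3, E2), GS2), ((E3, E2), GR1), ((E3, E2), GR2), ((E3, E3), GS1), ((E3, E3), GS2), ((E3, E3), GR1), ((E3, E3), GR2), ((E3, E4), GS1), ((E3, E4), GS2), ((E3, E4), GR1), ((E3, E4), GR2), ((E3, E5), GS1), ((E3, E5), GS2), ((E3, E5), GR1), ((E3, E5), GR2), ((E4, E0), GS1), ((E4, E0), GS2), ((E4, E0), GR1), ((E4, E0), GR2), ((E4, E1), GS1), ((E4, E1), GS2), ((E4, E1), GR1), ((E4, E1), GR2), ((E4, E2), GS1), ((E4, E2), GS2), ((E4, E2), GR1), ((E4, E2), GR2), ((E4, E3), GS1), ((E4, E3), GS2), ((E4, E3), GR1), ((E4, E3), GR2), ((E4, E4), GS1), ((E4, E4), GS2), ((E4, E4), GR1), ((E4, E4), GR2), ((E4, E5), GS1), ((E4, E5), GS2), ((E4, E5), GR1), ((E4, E5), GR2), ((E5, E0), GS1), ((E5, E0), GS2), ((E5, E0), GR1), ((E5, E0), GR2), ((E5, E1), GS1), ((E5, E1), GS2), ((E5, E1), GR1), ((E5, E1), GR2), ((E5, E2), GS1), ((E5, E2), GS2), ((E5, E2), GR1), ((E5, E2), GR2),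 ((E5, E3), GS1), ((E5, E3), GS2), ((E5, E3), GR1), ((E5, E3), GR2), ((E5, E4), GS1), ((E5, E4), GS2), ((E5, E4), GR1), ((E5, E4), GR2), ((E5, E5), GS1), ((E5, E5), GS2), ((E5, E5), GR1), ((E5, E5), GR2)]"

definition tr :: "s3 \<times> s3 \<Rightarrow> fvb_gen word" where
  "tr c = (case c of (p, q) \<Rightarrow> (case p of E0 \<Rightarrow> (case q of E0 \<Rightarrow> [] | E1 \<Rightarrow> [((Sig 1), True), ((Rho 1), True)] | E2 \<Rightarrow> [((Sig 2), True), ((Rho 2), True)] | E3 \<Rightarrow> [((Sig 1), True), ((Rho 1), True), ((Sig 2), True), ((Rho 2), True)] | E4 \<Rightarrow> [((Sig 1), True), ((Sig 2), True), ((Rho 2), True), ((Rho 1), True)] | E5 \<Rightarrow> [((Rho 1), True), ((Sig 2), True), ((Rho 2), True), ((Rho 1), True)]) | E1 \<Rightarrow> (case q of E0 \<Rightarrow> [((Sig 1), True)] | E1 \<Rightarrow> [((Rho 1), True)] | E2 \<Rightarrow> [((Sig 1), True), ((Sig 2), True), ((Rho 2), True)] | E3 \<Rightarrow> [((Rho 1), True), ((Sig 2), True), ((Rho 2), True)] | E4 \<Rightarrow> [((Sig 2), True), ((Rho 2), True), ((Rho 1), True)] | E5 \<Rightarrow> [((Sig 1), True), ((Rho 1), True), ((Sig 2), True), ((Rho 2), True), ((Rho 1), True)]) | E2 \<Rightarrow> (case q of E0 \<Rightarrow> [((Sig 2), True)] | E1 \<Rightarrow> [((Sig 1), True), ((Rho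 1), True), ((Sig 2), True)] | E2 \<Rightarrow> [((Rho 2), True)] | E3 \<Rightarrow> [((Sig 1), True), ((Rho 1), True), ((Rho 2), True)] | E4 \<Rightarrow> [((Rho 2), True), ((Sig 1), True), ((Rho 1), True)] | E5 \<Rightarrow> [((Sig 1), True), ((Sig 2), True), ((Rho 1), True), ((Rho 2), True), ((Rho 1), True)]) | E3 \<Rightarrow> (case q of E0 \<Rightarrow> [((Sig 1), True), ((Sig 2), True)] | E1 \<Rightarrow> [((Rho 1), True), ((Sig 2), True)] | E2 \<Rightarrow> [((Sig 1), True), ((Rho 2), True)] | E3 \<Rightarrow> [((Rho 1), True), ((Rho 2), True)] | E4 \<Rightarrow> [((Sig 1), True), ((Rho 2), True), ((Sig 1), True), ((Rho 1), True)] | E5 \<Rightarrow> [((Sig 2), True), ((Rho 1), True), ((Rho 2), True), ((Rho 1), True)]) | E4 \<Rightarrow> (case q of E0 \<Rightarrow> [((Sig 2), True), ((Sig 1), True)] | E1 \<Rightarrow> [((Sig 2), True), ((Rho 1), True)] | E2 \<Rightarrow> [((Rho 2), True), ((Sig 1), True)] | E3 \<Rightarrow> [((Sig 1), True), ((Sig 2), True), ((Rho 1), True), ((Rho 2), True)] | E4 \<Rightarrow> [((Rho 2), True), ((Rho 1), True)] | E5 \<Rightarrow> [((Sig 1), True), ((Rho 1), True), ((Rho 2), True), ((Rho 1), True)]) | E5 \<Rightarrow> (case q of E0 \<Rightarrow> [((Sig 1), True), ((Sig 2), True), ((Sig 1), True)] | E1 \<Rightarrow> [((Sig 1), True), ((Sig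 2), True), ((Rho 1), True)] | E2 \<Rightarrow> [((Sig 1), True), ((Rho 2), True), ((Sig 1), True)] | E3 \<Rightarrow> [((Sig 2), True), ((Rho 1), True), ((Rho 2), True)] | E4 \<Rightarrow> [((Sig 1), True), ((Rho 2), True), ((Rho 1), True)] | E5 \<Rightarrow> [((Rho 1), True), ((Rho 2), True), ((Rho 1), True)])))"

definition th :: "sym \<Rightarrow> tgt_gen word" where
  "th s = (case s of ((p, q), g) \<Rightarrow> (case p of E0 \<Rightarrow> (case q of E0 \<Rightarrow> (case g of GS1 \<Rightarrow> [] | GS2 \<Rightarrow> [] | GR1 \<Rightarrow> [] | GR2 \<Rightarrow> []) | E1 \<Rightarrow> (case g of GS1 \<Rightarrow> [((Tf 2), False), (Tx, True), (Tq, True)] | GS2 \<Rightarrow> [] | GR1 \<Rightarrow> [] | GR2 \<Rightarrow> []) | E2 \<Rightarrow> (case g of GS1 \<Rightarrow> [(Tx, True)] | GS2 \<Rightarrow> [(Tx, True), (Tx, True), (Ty, True), (Tv, False)] | GR1 \<Rightarrow> [] | GR2 \<Rightarrow> []) | E3 \<Rightarrow> (case g of GS1 \<Rightarrow> [((Tf 0), True)] | GS2 \<Rightarrow> [((Tf 1), True)] | GR1 \<Rightarrow> [] | GR2 \<Rightarrow> []) | E4 \<Rightarrow> (case g of GS1 \<Rightarrow> [(Tb, True)] | GS2 \<Rightarrow> [(Ta, True), ((Tf 1), False), ((Tf 0), True)] | GR1 \<Rightarrow> [] | GR2 \<Rightarrow> []) | E5 \<Rightarrow> (case g of GS1 \<Rightarrow>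 [(Tv, True), ((Tf 2), True)] | GS2 \<Rightarrow> [(Tv, True)] | GR1 \<Rightarrow> [] | GR2 \<Rightarrow> [])) | E1 \<Rightarrow> (case q of E0 \<Rightarrow> (case g of GS1 \<Rightarrow> [] | GS2 \<Rightarrow> [] | GR1 \<Rightarrow> [] | GR2 \<Rightarrow> []) | E1 \<Rightarrow> (case g of GS1 \<Rightarrow> [(Tq, False), (Tx, False), ((Tf 2), True)] | GS2 \<Rightarrow> [] | GR1 \<Rightarrow> [] | GR2 \<Rightarrow> []) | E2 \<Rightarrow> (case g of GS1 \<Rightarrow> [(Tx, False)] | GS2 \<Rightarrow> [(Tx, True), (Ty, True), ((Tf 2), True)] | GR1 \<Rightarrow> [] | GR2 \<Rightarrow> []) | E3 \<Rightarrow> (case g of GS1 \<Rightarrow> [((Tf 0), False)] | GS2 \<Rightarrow> [((Tf 0), False), ((Tf 1), True), (Tb, True)] | GR1 \<Rightarrow> [] | GR2 \<Rightarrow> []) | E4 \<Rightarrow> (case g of GS1 \<Rightarrow> [(Tb, False)] | GS2 \<Rightarrow> [(Tb, False), (Ta, True), (Tb, True), ((Tf 1), False)] | GR1 \<Rightarrow> [] | GR2 \<Rightarrow> []) | E5 \<Rightarrow> (case g of GS1 \<Rightarrow> [((Tf 2), False), (Tv, False)] | GS2 \<Rightarrow> [((Tf 2), False), (Tx, True), (Ty, True), (Tx, True), (Tq, True), (Tv, True), (Ty, False), (Tx, False), (Tx, False)] | GR1 \<Rightarrow> [] | GR2 \<Rightarrow> [])) | E2 \<Rightarrow> (case q of E0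 \<Rightarrow> (case g of GS1 \<Rightarrow> [] | GS2 \<Rightarrow> [] | GR1 \<Rightarrow> [] | GR2 \<Rightarrow> []) | E1 \<Rightarrow> (case g of GS1 \<Rightarrow> [((Tf 2), False), (Tx, True), (Tq, True), (Tv, True), (Tx, False)] | GS2 \<Rightarrow> [] | GR1 \<Rightarrow> [((Tf 1), True), (Ta, False)] | GR2 \<Rightarrow> []) | E2 \<Rightarrow> (case g of GS1 \<Rightarrow> [] | GS2 \<Rightarrow> [(Tv, True), (Ty, False), (Tx, False), (Tx, False)] | GR1 \<Rightarrow> [] | GR2 \<Rightarrow> []) | E3 \<Rightarrow> (case g of GS1 \<Rightarrow> [] | GS2 \<Rightarrow> [((Tf 1), False)] | GR1 \<Rightarrow> [] | GR2 \<Rightarrow> []) | E4 \<Rightarrow> (case g of GS1 \<Rightarrow> [((Tf 0), False), ((Tf 1), True), (Tb, True)] | GS2 \<Rightarrow> [((Tf 0), False), ((Tf 1), True), (Ta, False)] | GR1 \<Rightarrow> [] | GR2 \<Rightarrow> []) | E5 \<Rightarrow> (case g of GS1 \<Rightarrow> [(Tx, True), (Ty, True), ((Tf 2), True)] | GS2 \<Rightarrow> [(Tv, False)] | GR1 \<Rightarrow> [] | GR2 \<Rightarrow> [])) | E3 \<Rightarrow> (case q of E0 \<Rightarrow> (case g of GS1 \<Rightarrow> [] | GS2 \<Rightarrow> [] | GR1 \<Rightarrow> [] | GR2 \<Rightarrow> []) | E1 \<Rightarrow> (case g of GS1 \<Rightarrow> [(Tv, True)] | GS2 \<Rightarrow>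 [] | GR1 \<Rightarrow> [((Tf 0), False), ((Tf 1), True), (Ta, False)] | GR2 \<Rightarrow> []) | E2 \<Rightarrow> (case g of GS1 \<Rightarrow> [] | GS2 \<Rightarrow> [((Tf 2), False), (Ty, False), (Tx, False)] | GR1 \<Rightarrow> [] | GR2 \<Rightarrow> []) | E3 \<Rightarrow> (case g of GS1 \<Rightarrow> [] | GS2 \<Rightarrow> [(Tb, False), ((Tf 1), False), ((Tf 0), True)] | GR1 \<Rightarrow> [] | GR2 \<Rightarrow> []) | E4 \<Rightarrow> (case g of GS1 \<Rightarrow> [((Tf 1), True)] | GS2 \<Rightarrow> [((Tf 1), True), (Tb, False), (Ta, False), (Tb, True)] | GR1 \<Rightarrow> [] | GR2 \<Rightarrow> []) | E5 \<Rightarrow> (case g of GS1 \<Rightarrow> [(Tx, True), (Tx, True), (Ty, True), (Tv, False)] | GS2 \<Rightarrow> [(Tx, True), (Tx, True), (Ty, True), (Tv, False), (Tq, False), (Tx, False), (Ty, False), (Tx, False), ((Tf 2), True)] | GR1 \<Rightarrow> [] | GR2 \<Rightarrow> [])) | E4 \<Rightarrow> (case q of E0 \<Rightarrow> (case g of GS1 \<Rightarrow> [] | GS2 \<Rightarrow> [] | GR1 \<Rightarrow> [(Ta, True), ((Tf 1), False)] | GR2 \<Rightarrow> [(Ta, True), ((Tf 1), False)]) | E1 \<Rightarrow> (case g of GS1 \<Rightarrow> [(Tx, True), (Tv, False), (Tq, False), (Tx, False), ((Tf 2), True)] | GS2 \<Rightarrow> [(Tx, True)] | GR1 \<Rightarrow>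 [] | GR2 \<Rightarrow> []) | E2 \<Rightarrow> (case g of GS1 \<Rightarrow> [] | GS2 \<Rightarrow> [(Tv, True), ((Tf 2), True)] | GR1 \<Rightarrow> [] | GR2 \<Rightarrow> [((Tf 0), False), ((Tf 1), True), (Ta, False)]) | E3 \<Rightarrow> (case g of GS1 \<Rightarrow> [] | GS2 \<Rightarrow> [(Tb, True)] | GR1 \<Rightarrow> [] | GR2 \<Rightarrow> []) | E4 \<Rightarrow> (case g of GS1 \<Rightarrow> [(Tb, False), ((Tf 1), False), ((Tf 0), True)] | GS2 \<Rightarrow> [] | GR1 \<Rightarrow> [] | GR2 \<Rightarrow> []) | E5 \<Rightarrow> (case g of GS1 \<Rightarrow> [((Tf 2), False), (Ty, False), (Tx, False)] | GS2 \<Rightarrow> [((Tf 2), False), (Tx, True), (Tq, True)] | GR1 \<Rightarrow> [] | GR2 \<Rightarrow> [])) | E5 \<Rightarrow> (case q of E0 \<Rightarrow> (case g of GS1 \<Rightarrow> [] | GS2 \<Rightarrow> [] | GR1 \<Rightarrow> [(Ta, True), ((Tf 1), False), ((Tf 0), True)] | GR2 \<Rightarrow> [(Ta, True), ((Tf 1), False), ((Tf 0), True)]) | E1 \<Rightarrow> (case g of GS1 \<Rightarrow> [(Tv, False)] | GS2 \<Rightarrow> [(Tx, False)] | GR1 \<Rightarrow> [] | GR2 \<Rightarrow> []) | E2 \<Rightarrow> (case g of GS1 \<Rightarrow> [] | GS2 \<Rightarrow> [((Tf 2), False), (Tv, False)] | GR1 \<Rightarrow> [] | GR2 \<Rightarrow>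 [((Tf 1), True), (Ta, False)]) | E3 \<Rightarrow> (case g of GS1 \<Rightarrow> [] | GS2 \<Rightarrow> [(Tb, False)] | GR1 \<Rightarrow> [] | GR2 \<Rightarrow> []) | E4 \<Rightarrow> (case g of GS1 \<Rightarrow> [((Tf 1), False)] | GS2 \<Rightarrow> [] | GR1 \<Rightarrow> [] | GR2 \<Rightarrow> []) | E5 \<Rightarrow> (case g of GS1 \<Rightarrow> [(Tv, True), (Ty, False), (Tx, False), (Tx, False)] | GS2 \<Rightarrow> [(Tq, False), (Tx, False), ((Tf 2), True)] | GR1 \<Rightarrow> [] | GR2 \<Rightarrow> []))))"

definition kap :: "tgt_gen \<Rightarrow> sym word" where
  "kap a = (case a of Ta \<Rightarrow> [(((E0, E4), GS2), True), (((E0, E3), GS1), False), (((E0, E3), GS2), True)] | Tb \<Rightarrow> [(((E0, E4), GS1), True)] | Tf n \<Rightarrow> (if n = 0 then [(((E0, E3), GS1), True)] else if n = 1 then [(((E0, E3), GS2), True)] else [(((E0, E5), GS2), False), (((E0, E5), GS1), True)]) | Tx \<Rightarrow> [(((E0, E2), GS1), True)] | Ty \<Rightarrow> [(((E0, E2), GS1), False), (((E0, E2), GS1), False), (((E0, E2), GS2), True), (((E0, E5), GS2), True)] | Tu \<Rightarrow> [(((E0, E2), GS1), False), (((E0, E2), GS2), True)] | Tv \<Rightarrow> [(((E0, E5), GS2), True)] | Tp \<Rightarrow> [(((E0, E5), GS2), True), (((E0, E2), GS1), False), (((E0, E2), GS2), True), (((E0, E1), GS1), False), (((E0, E5), GS1),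 False), (((E0, E5), GS2), True), (((E0, E2), GS1), True)] | Tq \<Rightarrow> [(((E0, E2), GS1), False), (((E0, E5), GS2), False), (((E0, E5), GS1), True), (((E0, E1), GS1), True)])"

definition rank :: "sym \<Rightarrow> nat" where
  "rank s = (case s of ((p, q), g) \<Rightarrow> (case p of E0 \<Rightarrow> (case q of E0 \<Rightarrow> (case g of GS1 \<Rightarrow> 0 | GS2 \<Rightarrow> 0 | GR1 \<Rightarrow> 0 | GR2 \<Rightarrow> 0) | E1 \<Rightarrow> (case g of GS1 \<Rightarrow> 0 | GS2 \<Rightarrow> 0 | GR1 \<Rightarrow> 8 | GR2 \<Rightarrow> 0) | E2 \<Rightarrow> (case g of GS1 \<Rightarrow> 0 | GS2 \<Rightarrow> 0 | GR1 \<Rightarrow> 0 | GR2 \<Rightarrow> 13) | E3 \<Rightarrow> (case g of GS1 \<Rightarrow> 0 | GS2 \<Rightarrow> 0 | GR1 \<Rightarrow> 0 | GR2 \<Rightarrow> 15) | E4 \<Rightarrow> (case g of GS1 \<Rightarrow> 0 | GS2 \<Rightarrow> 0 | GR1 \<Rightarrow> 16 | GR2 \<Rightarrow> 42) | E5 \<Rightarrow> (case g of GS1 \<Rightarrow> 0 | GS2 \<Rightarrow> 0 | GR1 \<Rightarrow> 17 | GR2 \<Rightarrow> 72)) | E1 \<Rightarrow> (case q of E0 \<Rightarrow> (case g of GS1 \<Rightarrow> 1 | GS2 \<Rightarrow> 0 | GR1 \<Rightarrow> 0 | GR2 \<Rightarrow> 0) | E1 \<Rightarrow> (case g of GS1 \<Rightarrow>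 52 | GS2 \<Rightarrow> 0 | GR1 \<Rightarrow> 2 | GR2 \<Rightarrow> 0) | E2 \<Rightarrow> (case g of GS1 \<Rightarrow> 55 | GS2 \<Rightarrow> 91 | GR1 \<Rightarrow> 0 | GR2 \<Rightarrow> 26) | E3 \<Rightarrow> (case g of GS1 \<Rightarrow> 61 | GS2 \<Rightarrow> 67 | GR1 \<Rightarrow> 0 | GR2 \<Rightarrow> 27) | E4 \<Rightarrow> (case g of GS1 \<Rightarrow> 63 | GS2 \<Rightarrow> 84 | GR1 \<Rightarrow> 12 | GR2 \<Rightarrow> 31) | E5 \<Rightarrow> (case g of GS1 \<Rightarrow> 87 | GS2 \<Rightarrow> 95 | GR1 \<Rightarrow> 14 | GR2 \<Rightarrow> 82)) | E2 \<Rightarrow> (case q of E0 \<Rightarrow> (case g of GS1 \<Rightarrow> 0 | GS2 \<Rightarrow> 3 | GR1 \<Rightarrow> 0 | GR2 \<Rightarrow> 0) | E1 \<Rightarrow> (case g of GS1 \<Rightarrow> 97 | GS2 \<Rightarrow> 9 | GR1 \<Rightarrow> 78 | GR2 \<Rightarrow> 0) | E2 \<Rightarrow> (case g of GS1 \<Rightarrow> 0 | GS2 \<Rightarrow> 58 | GR1 \<Rightarrow> 0 | GR2 \<Rightarrow> 4) | E3 \<Rightarrow> (case g of GS1 \<Rightarrow> 22 | GS2 \<Rightarrow> 62 | GR1 \<Rightarrow> 0 | GR2 \<Rightarrow> 10) | E4 \<Rightarrow> (case g of GS1 \<Rightarrow> 73 | GS2 \<Rightarrow> 68 | GR1 \<Rightarrow>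 39 | GR2 \<Rightarrow> 75) | E5 \<Rightarrow> (case g of GS1 \<Rightarrow> 92 | GS2 \<Rightarrow> 94 | GR1 \<Rightarrow> 40 | GR2 \<Rightarrow> 49)) | E3 \<Rightarrow> (case q of E0 \<Rightarrow> (case g of GS1 \<Rightarrow> 0 | GS2 \<Rightarrow> 18 | GR1 \<Rightarrow> 0 | GR2 \<Rightarrow> 0) | E1 \<Rightarrow> (case g of GS1 \<Rightarrow> 96 | GS2 \<Rightarrow> 23 | GR1 \<Rightarrow> 71 | GR2 \<Rightarrow> 0) | E2 \<Rightarrow> (case g of GS1 \<Rightarrow> 0 | GS2 \<Rightarrow> 90 | GR1 \<Rightarrow> 0 | GR2 \<Rightarrow> 19) | E3 \<Rightarrow> (case g of GS1 \<Rightarrow> 7 | GS2 \<Rightarrow> 66 | GR1 \<Rightarrow> 0 | GR2 \<Rightarrow> 24) | E4 \<Rightarrow> (case g of GS1 \<Rightarrow> 83 | GS2 \<Rightarrow> 85 | GR1 \<Rightarrow> 44 | GR2 \<Rightarrow> 81) | E5 \<Rightarrow> (case g of GS1 \<Rightarrow> 59 | GS2 \<Rightarrow> 98 | GR1 \<Rightarrow> 45 | GR2 \<Rightarrow> 46)) | E4 \<Rightarrow> (case q of E0 \<Rightarrow> (case g of GS1 \<Rightarrow> 28 | GS2 \<Rightarrow> 5 | GR1 \<Rightarrow> 77 | GR2 \<Rightarrow> 79) | E1 \<Rightarrow> (case g of GS1 \<Rightarrow> 99 | GS2 \<Rightarrow> 56 | GR1 \<Rightarrow> 29 | GR2 \<Rightarrow>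 0) | E2 \<Rightarrow> (case g of GS1 \<Rightarrow> 33 | GS2 \<Rightarrow> 88 | GR1 \<Rightarrow> 0 | GR2 \<Rightarrow> 69) | E3 \<Rightarrow> (case g of GS1 \<Rightarrow> 36 | GS2 \<Rightarrow> 64 | GR1 \<Rightarrow> 0 | GR2 \<Rightarrow> 48) | E4 \<Rightarrow> (case g of GS1 \<Rightarrow> 74 | GS2 \<Rightarrow> 50 | GR1 \<Rightarrow> 34 | GR2 \<Rightarrow> 6) | E5 \<Rightarrow> (case g of GS1 \<Rightarrow> 93 | GS2 \<Rightarrow> 53 | GR1 \<Rightarrow> 37 | GR2 \<Rightarrow> 11)) | E5 \<Rightarrow> (case q of E0 \<Rightarrow> (case g of GS1 \<Rightarrow> 30 | GS2 \<Rightarrow> 20 | GR1 \<Rightarrow> 76 | GR2 \<Rightarrow> 70) | E1 \<Rightarrow> (case g of GS1 \<Rightarrow> 100 | GS2 \<Rightarrow> 57 | GR1 \<Rightarrow> 41 | GR2 \<Rightarrow> 0) | E2 \<Rightarrow> (case g of GS1 \<Rightarrow> 43 | GS2 \<Rightarrow> 89 | GR1 \<Rightarrow> 0 | GR2 \<Rightarrow> 80) | E3 \<Rightarrow> (case g of GS1 \<Rightarrow> 32 | GS2 \<Rightarrow> 65 | GR1 \<Rightarrow> 0 | GR2 \<Rightarrow> 47) | E4 \<Rightarrow> (case g of GS1 \<Rightarrow> 86 | GS2 \<Rightarrow> 51 | GR1 \<Rightarrow> 38 | GR2 \<Rightarrow> 21) | E5 \<Rightarrow> (case g of GS1 \<Rightarrow>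 60 | GS2 \<Rightarrow> 54 | GR1 \<Rightarrow> 35 | GR2 \<Rightarrow> 25))))"

definition kindS :: "sym \<Rightarrow> nat" where
  "kindS s = (case s of ((p, q), g) \<Rightarrow> (case p of E0 \<Rightarrow> (case q of E0 \<Rightarrow> (case g of GS1 \<Rightarrow> 0 | GS2 \<Rightarrow> 0 | GR1 \<Rightarrow> 0 | GR2 \<Rightarrow> 0) | E1 \<Rightarrow> (case g of GS1 \<Rightarrow> 1 | GS2 \<Rightarrow> 0 | GR1 \<Rightarrow> 2 | GR2 \<Rightarrow> 0) | E2 \<Rightarrow> (case g of GS1 \<Rightarrow> 1 | GS2 \<Rightarrow> 1 | GR1 \<Rightarrow> 0 | GR2 \<Rightarrow> 2) | E3 \<Rightarrow> (case g of GS1 \<Rightarrow> 1 | GS2 \<Rightarrow> 1 | GR1 \<Rightarrow> 0 | GR2 \<Rightarrow> 2) | E4 \<Rightarrow> (case g of GS1 \<Rightarrow> 1 | GS2 \<Rightarrow> 1 | GR1 \<Rightarrow> 2 | GR2 \<Rightarrow> 2) | E5 \<Rightarrow> (case g of GS1 \<Rightarrow> 1 | GS2 \<Rightarrow> 1 | GR1 \<Rightarrow> 2 | GR2 \<Rightarrow> 2)) | E1 \<Rightarrow> (case q of E0 \<Rightarrow> (case g of GS1 \<Rightarrow> 2 | GS2 \<Rightarrow> 0 | GR1 \<Rightarrow> 0 | GR2 \<Rightarrow> 0) | E1 \<Rightarrow> (case g of GS1 \<Rightarrow> 2 | GS2 \<Rightarrow> 0 | GR1 \<Rightarrow> 2 |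 GR2 \<Rightarrow> 0) | E2 \<Rightarrow> (case g of GS1 \<Rightarrow> 2 | GS2 \<Rightarrow> 2 | GR1 \<Rightarrow> 0 | GR2 \<Rightarrow> 2) | E3 \<Rightarrow> (case g of GS1 \<Rightarrow> 2 | GS2 \<Rightarrow> 2 | GR1 \<Rightarrow> 0 | GR2 \<Rightarrow> 2) | E4 \<Rightarrow> (case g of GS1 \<Rightarrow> 2 | GS2 \<Rightarrow> 2 | GR1 \<Rightarrow> 2 | GR2 \<Rightarrow> 2) | E5 \<Rightarrow> (case g of GS1 \<Rightarrow> 2 | GS2 \<Rightarrow> 2 | GR1 \<Rightarrow> 2 | GR2 \<Rightarrow> 2)) | E2 \<Rightarrow> (case q of E0 \<Rightarrow> (case g of GS1 \<Rightarrow> 0 | GS2 \<Rightarrow> 2 | GR1 \<Rightarrow> 0 | GR2 \<Rightarrow> 0) | E1 \<Rightarrow> (case g of GS1 \<Rightarrow> 2 | GS2 \<Rightarrow> 2 | GR1 \<Rightarrow> 2 | GR2 \<Rightarrow> 0) | E2 \<Rightarrow> (case g of GS1 \<Rightarrow> 0 | GS2 \<Rightarrow> 2 | GR1 \<Rightarrow> 0 | GR2 \<Rightarrow> 2) | E3 \<Rightarrow> (case g of GS1 \<Rightarrow> 2 | GS2 \<Rightarrow> 2 | GR1 \<Rightarrow> 0 | GR2 \<Rightarrow> 2) | E4 \<Rightarrow> (case g of GS1 \<Rightarrow> 2 | GS2 \<Rightarrow> 2 | GR1 \<Rightarrow> 2 | GR2 \<Rightarrow> 2) | E5 \<Rightarrow>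 (case g of GS1 \<Rightarrow> 2 | GS2 \<Rightarrow> 2 | GR1 \<Rightarrow> 2 | GR2 \<Rightarrow> 2)) | E3 \<Rightarrow> (case q of E0 \<Rightarrow> (case g of GS1 \<Rightarrow> 0 | GS2 \<Rightarrow> 2 | GR1 \<Rightarrow> 0 | GR2 \<Rightarrow> 0) | E1 \<Rightarrow> (case g of GS1 \<Rightarrow> 2 | GS2 \<Rightarrow> 2 | GR1 \<Rightarrow> 2 | GR2 \<Rightarrow> 0) | E2 \<Rightarrow> (case g of GS1 \<Rightarrow> 0 | GS2 \<Rightarrow> 2 | GR1 \<Rightarrow> 0 | GR2 \<Rightarrow> 2) | E3 \<Rightarrow> (case g of GS1 \<Rightarrow> 2 | GS2 \<Rightarrow> 2 | GR1 \<Rightarrow> 0 | GR2 \<Rightarrow> 2) | E4 \<Rightarrow> (case g of GS1 \<Rightarrow> 2 | GS2 \<Rightarrow> 2 | GR1 \<Rightarrow> 2 | GR2 \<Rightarrow> 2) | E5 \<Rightarrow> (case g of GS1 \<Rightarrow> 2 | GS2 \<Rightarrow> 2 | GR1 \<Rightarrow> 2 | GR2 \<Rightarrow> 2)) | E4 \<Rightarrow> (case q of E0 \<Rightarrow> (case g of GS1 \<Rightarrow> 2 | GS2 \<Rightarrow> 2 | GR1 \<Rightarrow> 2 | GR2 \<Rightarrow> 2) | E1 \<Rightarrow> (case g of GS1 \<Rightarrow> 2 | GS2 \<Rightarrow> 2 | GR1 \<Rightarrow> 2 | GR2 \<Rightarrow> 0) | E2 \<Rightarrow> (case g of GS1 \<Rightarrow>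 2 | GS2 \<Rightarrow> 2 | GR1 \<Rightarrow> 0 | GR2 \<Rightarrow> 2) | E3 \<Rightarrow> (case g of GS1 \<Rightarrow> 2 | GS2 \<Rightarrow> 2 | GR1 \<Rightarrow> 0 | GR2 \<Rightarrow> 2) | E4 \<Rightarrow> (case g of GS1 \<Rightarrow> 2 | GS2 \<Rightarrow> 2 | GR1 \<Rightarrow> 2 | GR2 \<Rightarrow> 2) | E5 \<Rightarrow> (case g of GS1 \<Rightarrow> 2 | GS2 \<Rightarrow> 2 | GR1 \<Rightarrow> 2 | GR2 \<Rightarrow> 2)) | E5 \<Rightarrow> (case q of E0 \<Rightarrow> (case g of GS1 \<Rightarrow> 2 | GS2 \<Rightarrow> 2 | GR1 \<Rightarrow> 2 | GR2 \<Rightarrow> 2) | E1 \<Rightarrow> (case g of GS1 \<Rightarrow> 2 | GS2 \<Rightarrow> 2 | GR1 \<Rightarrow> 2 | GR2 \<Rightarrow> 0) | E2 \<Rightarrow> (case g of GS1 \<Rightarrow> 2 | GS2 \<Rightarrow> 2 | GR1 \<Rightarrow> 0 | GR2 \<Rightarrow> 2) | E3 \<Rightarrow> (case g of GS1 \<Rightarrow> 2 | GS2 \<Rightarrow> 2 | GR1 \<Rightarrow> 0 | GR2 \<Rightarrow> 2) | E4 \<Rightarrow> (case g of GS1 \<Rightarrow> 2 | GS2 \<Rightarrow> 2 | GR1 \<Rightarrow> 2 | GR2 \<Rightarrow> 2) | E5 \<Rightarrow> (case g of GS1 \<Rightarrow> 2 | GS2 \<Rightarrow> 2 | GR1 \<Rightarrow>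 2 | GR2 \<Rightarrow> 2))))"

definition stepOf :: "sym \<Rightarrow> (s3 \<times> s3) \<times> nat \<times> nat" where
  "stepOf s = (case s of ((p, q), g) \<Rightarrow> (case p of E0 \<Rightarrow> (case q of E0 \<Rightarrow> (case g of GS1 \<Rightarrow> ((E0, E0), 0, 0) | GS2 \<Rightarrow> ((E0, E0), 0, 0) | GR1 \<Rightarrow> ((E0, E0), 0, 0) | GR2 \<Rightarrow> ((E0, E0), 0, 0)) | E1 \<Rightarrow> (case g of GS1 \<Rightarrow> ((E0, E0), 0, 0) | GS2 \<Rightarrow> ((E0, E0), 0, 0) | GR1 \<Rightarrow> ((E0, E1), 1, 0) | GR2 \<Rightarrow> ((E0, E0), 0, 0)) | E2 \<Rightarrow> (case g of GS1 \<Rightarrow> ((E0, E0), 0, 0) | GS2 \<Rightarrow> ((E0, E0), 0, 0) | GR1 \<Rightarrow> ((E0, E0), 0, 0) | GR2 \<Rightarrow> ((E0, E2), 3, 0)) | E3 \<Rightarrow> (case g of GS1 \<Rightarrow> ((E0, E0), 0, 0) | GS2 \<Rightarrow> ((E0, E0), 0, 0) | GR1 \<Rightarrow> ((E0, E0), 0, 0) | GR2 \<Rightarrow> ((E0, E3), 3, 0)) | E4 \<Rightarrow> (case g of GS1 \<Rightarrow> ((E0, E0), 0, 0) | GS2 \<Rightarrow> ((E0, E0), 0, 0) | GR1 \<Rightarrow> ((E0, E4), 1, 0) | GR2 \<Rightarrow> ((E3, E0), 5, 3)) | E5 \<Rightarrow> (case g of GS1 \<Rightarrow> ((E0, E0),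 0, 0) | GS2 \<Rightarrow> ((E0, E0), 0, 0) | GR1 \<Rightarrow> ((E0, E5), 1, 0) | GR2 \<Rightarrow> ((E1, E3), 5, 1))) | E1 \<Rightarrow> (case q of E0 \<Rightarrow> (case g of GS1 \<Rightarrow> ((E0, E0), 0, 1) | GS2 \<Rightarrow> ((E0, E0), 0, 0) | GR1 \<Rightarrow> ((E0, E0), 0, 0) | GR2 \<Rightarrow> ((E0, E0), 0, 0)) | E1 \<Rightarrow> (case g of GS1 \<Rightarrow> ((E0, E1), 0, 1) | GS2 \<Rightarrow> ((E0, E0), 0, 0) | GR1 \<Rightarrow> ((E0, E0), 1, 1) | GR2 \<Rightarrow> ((E0, E0), 0, 0)) | E2 \<Rightarrow> (case g of GS1 \<Rightarrow> ((E0, E2), 0, 1) | GS2 \<Rightarrow> ((E0, E2), 4, 1) | GR1 \<Rightarrow> ((E0, E0), 0, 0) | GR2 \<Rightarrow> ((E1, E2), 3, 0)) | E3 \<Rightarrow> (case g of GS1 \<Rightarrow> ((E0, E3), 0, 1) | GS2 \<Rightarrow> ((E0, E3), 4, 1) | GR1 \<Rightarrow> ((E0, E0), 0, 0) | GR2 \<Rightarrow> ((E1, E3), 3, 0)) | E4 \<Rightarrow> (case g of GS1 \<Rightarrow> ((E0, E4), 0, 1) | GS2 \<Rightarrow> ((E0, E4), 4, 1) | GR1 \<Rightarrow> ((E0, E2), 1, 1) | GR2 \<Rightarrow> ((E2, E0), 5, 3)) | E5 \<Rightarrow> (case g of GS1 \<Rightarrow> ((E0, E5), 0, 1) | GS2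 \<Rightarrow> ((E0, E5), 4, 1) | GR1 \<Rightarrow> ((E0, E3), 1, 1) | GR2 \<Rightarrow> ((E0, E3), 5, 1))) | E2 \<Rightarrow> (case q of E0 \<Rightarrow> (case g of GS1 \<Rightarrow> ((E0, E0), 0, 0) | GS2 \<Rightarrow> ((E0, E0), 2, 1) | GR1 \<Rightarrow> ((E0, E0), 0, 0) | GR2 \<Rightarrow> ((E0, E0), 0, 0)) | E1 \<Rightarrow> (case g of GS1 \<Rightarrow> ((E1, E1), 4, 2) | GS2 \<Rightarrow> ((E0, E1), 2, 1) | GR1 \<Rightarrow> ((E2, E1), 1, 0) | GR2 \<Rightarrow> ((E0, E0), 0, 0)) | E2 \<Rightarrow> (case g of GS1 \<Rightarrow> ((E0, E0), 0, 0) | GS2 \<Rightarrow> ((E0, E2), 2, 1) | GR1 \<Rightarrow> ((E0, E0), 0, 0) | GR2 \<Rightarrow> ((E0, E0), 3, 1)) | E3 \<Rightarrow> (case g of GS1 \<Rightarrow> ((E1, E0), 6, 2) | GS2 \<Rightarrow> ((E0, E3), 2, 1) | GR1 \<Rightarrow> ((E0, E0), 0, 0) | GR2 \<Rightarrow> ((E0, E1), 3, 1)) | E4 \<Rightarrow> (case g of GS1 \<Rightarrow> ((E1, E3), 6, 2) | GS2 \<Rightarrow> ((E0, E4), 2, 1) | GR1 \<Rightarrow> ((E2, E4), 1, 0) | GR2 \<Rightarrow> ((E2, E4), 3, 0)) | E5 \<Rightarrow> (case g of GS1 \<Rightarrow> ((E1, E2), 6, 2) | GS2 \<Rightarrow>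 ((E0, E5), 2, 1) | GR1 \<Rightarrow> ((E2, E5), 1, 0) | GR2 \<Rightarrow> ((E4, E3), 5, 1))) | E3 \<Rightarrow> (case q of E0 \<Rightarrow> (case g of GS1 \<Rightarrow> ((E0, E0), 0, 0) | GS2 \<Rightarrow> ((E1, E0), 2, 1) | GR1 \<Rightarrow> ((E0, E0), 0, 0) | GR2 \<Rightarrow> ((E0, E0), 0, 0)) | E1 \<Rightarrow> (case g of GS1 \<Rightarrow> ((E0, E5), 6, 2) | GS2 \<Rightarrow> ((E1, E1), 2, 1) | GR1 \<Rightarrow> ((E1, E1), 6, 4) | GR2 \<Rightarrow> ((E0, E0), 0, 0)) | E2 \<Rightarrow> (case g of GS1 \<Rightarrow> ((E0, E0), 0, 0) | GS2 \<Rightarrow> ((E5, E2), 4, 1) | GR1 \<Rightarrow> ((E0, E0), 0, 0) | GR2 \<Rightarrow> ((E1, E0), 3, 1)) | E3 \<Rightarrow> (case g of GS1 \<Rightarrow> ((E0, E0), 6, 2) | GS2 \<Rightarrow> ((E5, E3), 4, 1) | GR1 \<Rightarrow> ((E0, E0), 0, 0) | GR2 \<Rightarrow> ((E1, E1), 3, 1)) | E4 \<Rightarrow> (case g of GS1 \<Rightarrow> ((E0, E3), 6, 2) | GS2 \<Rightarrow> ((E1, E4), 2, 1) | GR1 \<Rightarrow> ((E3, E4), 1, 0) | GR2 \<Rightarrow> ((E4, E0), 5, 3)) | E5 \<Rightarrow> (case g of GS1 \<Rightarrow> ((E0, E2), 6, 2) | GS2 \<Rightarrow> ((E1, E5), 2,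 1) | GR1 \<Rightarrow> ((E3, E5), 1, 0) | GR2 \<Rightarrow> ((E3, E5), 3, 0))) | E4 \<Rightarrow> (case q of E0 \<Rightarrow> (case g of GS1 \<Rightarrow> ((E2, E0), 0, 1) | GS2 \<Rightarrow> ((E0, E0), 4, 3) | GR1 \<Rightarrow> ((E4, E0), 6, 0) | GR2 \<Rightarrow> ((E2, E1), 6, 1)) | E1 \<Rightarrow> (case g of GS1 \<Rightarrow> ((E2, E1), 0, 1) | GS2 \<Rightarrow> ((E4, E1), 6, 5) | GR1 \<Rightarrow> ((E2, E0), 1, 1) | GR2 \<Rightarrow> ((E0, E0), 0, 0)) | E2 \<Rightarrow> (case g of GS1 \<Rightarrow> ((E2, E2), 0, 1) | GS2 \<Rightarrow> ((E4, E2), 6, 5) | GR1 \<Rightarrow> ((E0, E0), 0, 0) | GR2 \<Rightarrow> ((E0, E4), 6, 3)) | E3 \<Rightarrow> (case g of GS1 \<Rightarrow> ((E2, E3), 0, 1) | GS2 \<Rightarrow> ((E4, E3), 6, 5) | GR1 \<Rightarrow> ((E0, E0), 0, 0) | GR2 \<Rightarrow> ((E4, E3), 3, 0)) | E4 \<Rightarrow> (case g of GS1 \<Rightarrow> ((E2, E4), 0, 1) | GS2 \<Rightarrow> ((E4, E4), 6, 5) | GR1 \<Rightarrow> ((E2, E2), 1, 1) | GR2 \<Rightarrow> ((E0, E0), 5, 3)) | E5 \<Rightarrow> (case g of GS1 \<Rightarrow> ((E2, E5), 0, 1) | GS2 \<Rightarrow> ((E4, E5), 6, 5) | GR1 \<Rightarrow>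 ((E2, E3), 1, 1) | GR2 \<Rightarrow> ((E0, E1), 5, 3))) | E5 \<Rightarrow> (case q of E0 \<Rightarrow> (case g of GS1 \<Rightarrow> ((E2, E0), 4, 2) | GS2 \<Rightarrow> ((E1, E0), 4, 3) | GR1 \<Rightarrow> ((E2, E4), 5, 2) | GR2 \<Rightarrow> ((E4, E2), 3, 1)) | E1 \<Rightarrow> (case g of GS1 \<Rightarrow> ((E2, E1), 4, 2) | GS2 \<Rightarrow> ((E5, E1), 2, 0) | GR1 \<Rightarrow> ((E3, E0), 1, 1) | GR2 \<Rightarrow> ((E0, E0), 0, 0)) | E2 \<Rightarrow> (case g of GS1 \<Rightarrow> ((E3, E2), 0, 1) | GS2 \<Rightarrow> ((E5, E2), 2, 0) | GR1 \<Rightarrow> ((E0, E0), 0, 0) | GR2 \<Rightarrow> ((E4, E0), 3, 1)) | E3 \<Rightarrow> (case g of GS1 \<Rightarrow> ((E2, E0), 6, 2) | GS2 \<Rightarrow> ((E5, E3), 2, 0) | GR1 \<Rightarrow> ((E0, E0), 0, 0) | GR2 \<Rightarrow> ((E3, E5), 5, 1)) | E4 \<Rightarrow> (case g of GS1 \<Rightarrow> ((E2, E3), 6, 2) | GS2 \<Rightarrow> ((E5, E4), 2, 0) | GR1 \<Rightarrow> ((E2, E3), 5, 2) | GR2 \<Rightarrow> ((E1, E0), 5, 3)) | E5 \<Rightarrow> (case g of GS1 \<Rightarrow> ((E2, E2), 6, 2) | GS2 \<Rightarrow> ((E5, E5), 2, 0) | GR1 \<Rightarrow> ((E2, E2), 5,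 2) | GR2 \<Rightarrow> ((E1, E1), 5, 3)))))"

definition c4 :: "s3 \<times> s3 \<Rightarrow> nat \<Rightarrow> (tgt_gen word \<times> nat \<times> bool) list" where
  "c4 c j = (if c = (E3, E5) \<and> j = 6 then [([(Tx, True), (Tv, False), (Tq, False)], 3, False), ([(Tx, True), (Tv, False)], 2, False), ([(Tx, True)], 1, False)] else (if c = (E3, E4) \<and> j = 6 then [([((Tf 1), True), (Ta, False), (Tb, False)], 0, True)] else (if c = (E1, E5) \<and> j = 6 then [([((Tf 2), False), (Tx, True), (Tq, True), (Tv, True)], 1, True), ([((Tf 2), False), (Tx, True), (Tq, True)], 2, True), ([((Tf 2), False), (Tx, True)], 3, True)] else (if c = (E1, E4) \<and> j = 6 then [([(Ta, True), (Tb, False), (Ta, False)], 0, False)] else []))))"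

definition c5tab :: "(tgt_gen \<times> (tgt_gen word \<times> nat \<times> bool) list) list" where
  "c5tab = [(Tu, [([], 1, True)]), (Tp, [([(Tv, True)], 1, True), ([], 2, True)])]"

definition c6tab :: "(nat \<times> (sym word \<times> ((s3 \<times> s3) \<times> nat) \<times> bool) list) list" where
  "c6tab = [(0, [([(((E0, E4), GS1), True)], ((E1, E4), 6), False)]), (3, [([(((E0, E2), GS1), False), (((E0, E2), GS1), False), (((E0, E2), GS2), True), (((E0, E5), GS1), True), (((E0, E1), GS1), True), (((E0, E2), GS2), False), (((E0, E2), GS1), True), (((E0, E5), GS2), False), (((E0, E1), GS1), False)], ((E1, E5), 6), True)])]"

definition cnftab :: "((bool \<times> s3 \<times> nat \<times> bool) \<times> (fvb_gen word \<times> nat \<times> bool) list) list" where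
  "cnftab = [((True, E0, 1, False), [([], 0, False)]), ((True, E0, 2, False), [([], 2, False)]), ((True, E1, 1, True), [([], 0, True)]), ((True, E1, 2, False), [([((Sig 1), True)], 2, False)]), ((True, E2, 1, False), [([((Sig 2), True)], 0, False)]), ((True, E2, 2, True), [([], 2, True)]), ((True, E3, 1, False), [([((Sig 1), True), ((Sig 2), True)], 0, False)]), ((True, E3, 2, True), [([((Sig 1), True)], 2, True)]), ((True, E4, 1, True), [([((Sig 2), True)], 0, True)]), ((True, E4, 2, True), [([], 4, False)]), ((True, E4, 2, False), [([((Sig 2), True), ((Sig 1), True), ((Sig 2), False), ((Sig 1), False), ((Sig 2), False)], 0, False), ([((Sig 2), True), ((Sig 1), True), ((Sig 2), False), ((Sig 1), False), ((Sig 2), False)], 4, True)]), ((True, E5, 1, True), [([((Sig 1), True), ((Sig 2), True)], 0, True)]), ((True, E5, 2, True), [([], 0, True), ([((Sig 1), False)], 4, False)]), ((True, E5, 2, False), [([], 4, True)]), ((False, E0, 1, False), [([], 1, False)]), ((False, E0, 2, False), [([], 3, False)]), ((False, E1, 1, True), [([], 1, True)]), ((False, E1, 2, False), [([((Rho 1), True)], 3, False)]), ((False, E2, 1, False), [([((Rho 2), True)], 1, False)]), ((False, E2, 2, True), [([], 3, True)]), ((False, E3, 1, False), [([((Rho 1), True), ((Rho 2), True)], 1, False)]), ((False, E3, 2, True), [([((Rho 1), True)], 3, True)]), ((False, E4, 1, True), [([((Rho 2), True)], 1, True)]), ((False, E4, 2, True), [([], 5, False)]), ((False, E4, 2, False),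 [([((Rho 2), True), ((Rho 1), True), ((Rho 2), False), ((Rho 1), False), ((Rho 2), False)], 1, False), ([((Rho 2), True), ((Rho 1), True), ((Rho 2), False), ((Rho 1), False), ((Rho 2), False)], 5, True)]), ((False, E5, 1, True), [([((Rho 1), True), ((Rho 2), True)], 1, True)]), ((False, E5, 2, True), [([], 1, True), ([((Rho 1), False)], 5, False)]), ((False, E5, 2, False), [([], 5, True)])]"

definition cpitab :: "((bool \<times> nat) \<times> (fvb_gen word \<times> nat \<times> bool) list) list" where
  "cpitab = [((True, 0), [([], 0, True)]), ((True, 1), [([], 0, True)]), ((True, 2), [([], 2, True)]), ((True, 3), [([], 2, True)]), ((True, 4), [([], 4, True)]), ((True, 5), [([], 4, True)]), ((True, 6), [([], 4, True)]), ((False, 1), [([], 1, True)]), ((False, 3), [([], 3, True)]), ((False, 5), [([], 5, True)])]"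

definition gi :: "fvb_gen \<Rightarrow> g4" where
  "gi g = (case g of Sig i \<Rightarrow> (if i = 1 then GS1 else GS2) | Rho i \<Rightarrow> (if i = 1 then GR1 else GR2))"

definition act4 :: "s3 \<times> s3 \<Rightarrow> g4 \<Rightarrow> s3 \<times> s3" where
  "act4 c h = (case c of (p, q) \<Rightarrow> (case h of GS1 \<Rightarrow> (m3 p (sg 1), q) | GS2 \<Rightarrow> (m3 p (sg 2), q)
      | GR1 \<Rightarrow> (m3 p (sg 1), m3 q (sg 1)) | GR2 \<Rightarrow> (m3 p (sg 2), m3 q (sg 2))))"

definition act :: "s3 \<times> s3 \<Rightarrow> fvb_gen \<Rightarrow> s3 \<times> s3" where "act c g = act4 c (gi g)"

definition actw :: "s3 \<times> s3 \<Rightarrow> fvb_gen word \<Rightarrow> s3 \<times> s3" where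
  "actw c w = foldl (\<lambda>c x. act c (fst x)) c w"

fun rho :: "s3 \<times> s3 \<Rightarrow> fvb_gen word \<Rightarrow> sym word" where
  "rho c [] = []"
| "rho c ((g, b) # w) = (if b then ((c, gi g), True) # rho (act c g) w
                         else ((act c g, gi g), False) # rho (act c g) w)"

definition tau :: "s3 \<times> s3 \<Rightarrow> fvb_gen word \<Rightarrow> tgt_gen word" where
  "tau c w = substw th (rho c w)"
definition Qs :: "sym \<Rightarrow> sym word" where "Qs s = substw kap (th s)"

definition gensL :: "fvb_gen list" where "gensL = [Sig 1, Sig 2, Rho 1, Rho 2]"
definition TgensL :: "tgt_gen list" where "TgensL = [Ta, Tb, Tf 0, Tf 1, Tf 2, Tx, Ty, Tu, Tv, Tp, Tq]"

definition R3L :: "fvb_gen word list" where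
  "R3L = [relation (gen (Sig 1) @ gen (Sig 1)) [], relation (gen (Rho 1) @ gen (Rho 1)) [],
          relation (gen (Sig 2) @ gen (Sig 2)) [], relation (gen (Rho 2) @ gen (Rho 2)) [],
          relation (gen (Sig 1) @ gen (Sig 2) @ gen (Sig 1)) (gen (Sig 2) @ gen (Sig 1) @ gen (Sig 2)),
          relation (gen (Rho 1) @ gen (Rho 2) @ gen (Rho 1)) (gen (Rho 2) @ gen (Rho 1) @ gen (Rho 2)),
          relation (gen (Rho 1) @ gen (Rho 2) @ gen (Sig 1)) (gen (Sig 2) @ gen (Rho 1) @ gen (Rho 2))]"

definition TL :: "tgt_gen word list" where
  "TL = [relation (gen Ta @ gen Tb) (gen Tb @ gen Ta),
     relation (gen Tx @ gen Ty) (gen Tu @ gen Tv),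
     relation (gen Tv @ gen Tu) (gen Tp @ gen Tq),
     relation (gen Tq @ gen Tp) (gen Ty @ gen Tx)]"

definition lk :: "('a \<times> 'b list) list \<Rightarrow> 'a \<Rightarrow> 'b list" where
  "lk tab x = (case map_of tab x of Some w \<Rightarrow> w | None \<Rightarrow> [])"

definition ig :: "g4 \<Rightarrow> fvb_gen" where
  "ig h = (case h of GS1 \<Rightarrow> Sig 1 | GS2 \<Rightarrow> Sig 2 | GR1 \<Rightarrow> Rho 1 | GR2 \<Rightarrow> Rho 2)"

definition Tw :: "tgt_gen word \<Rightarrow> bool" where
  "Tw w = list_all (\<lambda>x. fst x \<in> set TgensL) w"
definition Fw :: "fvb_gen word \<Rightarrow> bool" where
  "Fw w = list_all (\<lambda>x. fst x \<in> set gensL) w"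

definition chkC4 :: bool where
  "chkC4 = list_all (\<lambda>c. list_all (\<lambda>j. freered (tau c (R3L ! j)) =
      freered (prodcert (map (\<lambda>(w, i, s). (w, TL ! i, s)) (c4 c j))) \<and>
      list_all (\<lambda>(w, i, s). Tw w \<and> i < 4) (c4 c j)) [0,1,2,3,4,5,6]) cosL"

definition chkR :: bool where
  "chkR = list_all (\<lambda>c. list_all (\<lambda>r. actw c r = c) R3L) cosL"

definition chkTr :: bool where
  "chkTr = list_all (\<lambda>c. Fw (tr c) \<and> actw (E0, E0) (tr c) = c \<and> tau (E0, E0) (tr c) = [] \<and>
      tau c (winv (tr c)) = []) cosL"

definition stepchk :: "sym \<Rightarrow> bool" where
  "stepchk s = (case stepOf s of (c, j, k) \<Rightarrow> (let w = rho c (R3L ! j) in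
     j < 7 \<and> k < length w \<and> fst (w ! k) = s \<and>
     list_all (\<lambda>x. rank (fst x) < rank s) (take k w @ drop (Suc k) w) \<and>
     freered (if snd (w ! k) then Qs s else winv (Qs s)) =
       freered (winv (substw Qs (take k w)) @ winv (substw Qs (drop (Suc k) w)))))"

definition symchk :: "sym \<Rightarrow> bool" where
  "symchk s = (Tw (th s) \<and> (case s of (c, h) \<Rightarrow>
     (if kindS s = 0 then th s = [] \<and> tr (act c (ig h)) = tr c @ [(ig h, True)]
      else if kindS s = 1 then freered (Qs s) = [(s, True)]
      else stepchk s)))"

definition chkSym :: bool where "chkSym = list_all symchk symL"

definition chkC5 :: bool where
  "chkC5 = list_all (\<lambda>a. freered (substw th (kap a) @ [(a, False)]) =
      freered (prodcert (map (\<lambda>(w, i, s). (w, TL ! i, s)) (lk c5tab a))) \<and>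
      list_all (\<lambda>(w, i, s). Tw w \<and> i < 4) (lk c5tab a)) TgensL"

definition chkC6 :: bool where
  "chkC6 = list_all (\<lambda>i. freered (substw kap (TL ! i)) =
      freered (prodcert (map (\<lambda>(w, (c, j), s). (w, substw kap (tau c (R3L ! j)), s)) (lk c6tab i))) \<and>
      list_all (\<lambda>(w, (c, j), s). j < 7) (lk c6tab i)) [0,1,2,3]"

definition nfw :: "bool \<Rightarrow> s3 \<Rightarrow> fvb_gen word" where
  "nfw k p = map (\<lambda>i. (if k then Sig i else Rho i, True)) (nfL p)"

definition chkNF :: bool where
  "chkNF = list_all (\<lambda>k. list_all (\<lambda>p. list_all (\<lambda>i. list_all (\<lambda>b.
     freered (nfw k p @ [(if k then Sig i else Rho i, b)] @ winv (nfw k (m3 p (sg i)))) =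
       freered (prodcert (map (\<lambda>(w, i, s). (w, R3L ! i, s)) (lk cnftab (k, p, i, b)))) \<and>
     list_all (\<lambda>(w, i, s). Fw w \<and> i < 7) (lk cnftab (k, p, i, b))) [True, False]) [1, 2])
     [E0, E1, E2, E3, E4, E5]) [True, False]"

definition mS :: "fvb_gen \<Rightarrow> fvb_gen word" where
  "mS g = (case g of Sig i \<Rightarrow> [(Sig i, True)] | Rho i \<Rightarrow> [(Sig i, True)])"
definition mN :: "fvb_gen \<Rightarrow> fvb_gen word" where
  "mN g = (case g of Sig i \<Rightarrow> [] | Rho i \<Rightarrow> [(Rho i, True)])"

definition chkPI :: bool where
  "chkPI = list_all (\<lambda>k. list_all (\<lambda>j. 
     freered (substw (if k then mS else mN) (R3L ! j)) =
       freered (prodcert (map (\<lambda>(w, i, s). (w, R3L ! i, s)) (lk cpitab (k, j)))) \<and>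
     list_all (\<lambda>(w, i, s). Fw w \<and> i < 7) (lk cpitab (k, j))) [0,1,2,3,4,5,6]) [True, False]"

lemma R3L_eq: "R3L = [[(Sig 1, True), (Sig 1, True)], [(Rho 1, True), (Rho 1, True)],
  [(Sig 2, True), (Sig 2, True)], [(Rho 2, True), (Rho 2, True)],
  [(Sig 1, True), (Sig 2, True), (Sig 1, True), (Sig 2, False), (Sig 1, False), (Sig 2, False)],
  [(Rho 1, True), (Rho 2, True), (Rho 1, True), (Rho 2, False), (Rho 1, False), (Rho 2, False)],
  [(Rho 1, True), (Rho 2, True), (Sig 1, True), (Rho 2, False), (Rho 1, False), (Sig 2, False)]]"
  by (simp add: R3L_def relation_def gen_def winv_def)

lemma TL_eq: "TL = [[(Ta, True), (Tb, True), (Ta, False), (Tb, False)],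
  [(Tx, True), (Ty, True), (Tv, False), (Tu, False)],
  [(Tv, True), (Tu, True), (Tq, False), (Tp, False)],
  [(Tq, True), (Tp, True), (Tx, False), (Ty, False)]]"
  by (simp add: TL_def relation_def gen_def winv_def)

lemmas evdefs = tau_def c4_def th_def act_def act4_def gi_def m3_def sg_def freered_def
  R3L_eq TL_eq cosL_def Tw_def Fw_def TgensL_def gensL_def actw_def tr_def lk_def ig_def
  kap_def Qs_def rank_def kindS_def stepOf_def symL_def c5tab_def c6tab_def nfw_def nfL_def
  cnftab_def cpitab_def mS_def mN_def

lemma chkC4: chkC4 unfolding chkC4_def by (simp add: evdefs)
lemma chkR: chkR unfolding chkR_def by (simp add: evdefs)
lemma chkTr: chkTr unfolding chkTr_def by (simp add: evdefs)
lemma chkSym: chkSym unfolding chkSym_def symchk_def stepchk_def by (simp add: evdefs)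
lemma chkC5: chkC5 unfolding chkC5_def by (simp add: evdefs)
lemma chkC6: chkC6 unfolding chkC6_def by (simp add: evdefs)
lemma chkNF: chkNF unfolding chkNF_def by (simp add: evdefs)
lemma chkPI: chkPI unfolding chkPI_def by (simp add: evdefs)



abbreviation "A3 \<equiv> fvb_gens 3"
abbreviation "R3 \<equiv> fvb_rels 3"
abbreviation "FV \<equiv> FVB 3"
abbreviation "AT \<equiv> tgt_gens"
abbreviation "RT \<equiv> tgt_rels"
abbreviation "TT \<equiv> Z2_F3_Gamma"

lemma A3_eq: "A3 = set gensL"
  unfolding fvb_gens_def gensL_def by (auto simp: le_Suc_eq numeral_eq_Suc)

lemma R3_eq: "R3 = set R3L"
  unfolding fvb_rels_def R3L_def by (auto simp: le_Suc_eq numeral_eq_Suc)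

lemma AT_eq: "AT = set TgensL" by (simp add: tgt_gens_def TgensL_def)
lemma RT_eq: "RT = set TL" by (simp add: tgt_rels_def TL_def)
lemma FV_def': "FV = presented_group A3 R3" by (simp add: FVB_def)
lemma TT_def': "TT = presented_group AT RT" by (simp add: Z2_F3_Gamma_def)

lemma Fw_words: "Fw w = (w \<in> words A3)"
  by (auto simp: Fw_def A3_eq words_def list_all_iff)
lemma Tw_words: "Tw w = (w \<in> words AT)"
  by (auto simp: Tw_def AT_eq words_def list_all_iff)

lemma cosL_all: "c \<in> set cosL"
  by (cases c; rename_tac p q; case_tac p; case_tac q; simp add: cosL_def)

lemma symL_all: "s \<in> set symL"
proof -
  obtain c h where s: "s = (c, h)" by fastforce
  show ?thesis unfolding s
    by (cases c; rename_tac p q; case_tac p; case_tac q; case_tac h; simp add: symL_def)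
qed

lemma act4_inv[simp]: "act4 (act4 c h) h = c"
  by (cases c; rename_tac p q; case_tac p; case_tac q; case_tac h; simp add: act4_def m3_def sg_def)

lemma gi_ig[simp]: "gi (ig h) = h" by (cases h) (simp_all add: gi_def ig_def)
lemma ig_A3[simp]: "ig h \<in> A3" by (cases h) (simp_all add: ig_def A3_eq gensL_def)
lemma ig_gi: "g \<in> A3 \<Longrightarrow> ig (gi g) = g"
  by (auto simp: A3_eq gensL_def gi_def ig_def)

lemma act_inv[simp]: "act (act c g) g = c" by (simp add: act_def)

lemma actw_Nil[simp]: "actw c [] = c" by (simp add: actw_def)
lemma actw_Cons[simp]: "actw c (x # w) = actw (act c (fst x)) w" by (simp add: actw_def)
lemma actw_append[simp]: "actw c (u @ v) = actw (actw c u) v" by (simp add: actw_def)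
lemma actw_winv[simp]: "actw (actw c w) (winv w) = c"
  by (induction w arbitrary: c) auto

lemma actw_rel: "r \<in> R3 \<Longrightarrow> actw c r = c"
  using chkR cosL_all[of c] by (auto simp: chkR_def list_all_iff R3_eq)

lemma actw_pres_eq: "pres_eq A3 R3 u v \<Longrightarrow> actw c u = actw c v"
proof (induction arbitrary: c rule: pres_eq.induct)
  case (relator u v r) then show ?case by (simp add: actw_rel)
qed auto

lemma rho_append[simp]: "rho c (u @ v) = rho c u @ rho (actw c u) v"
  by (induction c u rule: rho.induct) auto

lemma tau_append[simp]: "tau c (u @ v) = tau c u @ tau (actw c u) v"
  by (simp add: tau_def)

lemma th_words: "th s \<in> words AT"
  using chkSym symL_all[of s] by (auto simp: chkSym_def list_all_iff symchk_def Tw_words)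

lemma substw_th_words: "substw th w \<in> words AT"
  by (rule substw_words) (simp add: th_words)

lemma tau_words: "tau c w \<in> words AT"
  by (simp add: tau_def substw_th_words)

lemma TL_words: "r \<in> set TL \<Longrightarrow> r \<in> words AT"
  by (auto simp: TL_eq AT_eq TgensL_def)
lemma R3L_words: "r \<in> set R3L \<Longrightarrow> r \<in> words A3"
  by (auto simp: R3L_eq A3_eq gensL_def)

lemma set7: "j < 7 \<Longrightarrow> j \<in> set [0,1,2,3,4,5,6::nat]"
  by (auto simp: less_Suc_eq numeral_eq_Suc)
lemma set4: "j < 4 \<Longrightarrow> j \<in> set [0,1,2,3::nat]"
  by (auto simp: less_Suc_eq numeral_eq_Suc)
lemma R3L_len: "length R3L = 7" by (simp add: R3L_def)
lemma TL_len: "length TL = 4" by (simp add: TL_def)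

lemma tau_rel: assumes "r \<in> R3" shows "pres_eq AT RT (tau c r) []"
proof -
  obtain j where j: "j < 7" "r = R3L ! j" using assms R3L_len by (auto simp: R3_eq in_set_conv_nth)
  have ch: "freered (tau c r) = freered (prodcert (map (\<lambda>(w, i, s). (w, TL ! i, s)) (c4 c j))) \<and>
      list_all (\<lambda>(w, i, s). Tw w \<and> i < 4) (c4 c j)"
    using chkC4 cosL_all[of c] set7[OF j(1)] j(2) by (auto simp: chkC4_def list_all_iff)
  show ?thesis
  proof (rule pg_cert[OF tau_words _ conjunct1[OF ch]])
    show "\<forall>(w, r, s)\<in>set (map (\<lambda>(w, i, s). (w, TL ! i, s)) (c4 c j)). w \<in> words AT \<and> r \<in> RT \<and> r \<in> words AT"
      using conjunct2[OF ch] TL_len by (auto simp: list_all_iff Tw_words RT_eq TL_words)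
  qed
qed

lemma tau_pres_eq: "pres_eq A3 R3 u v \<Longrightarrow> pres_eq AT RT (tau c u) (tau c v)"
proof (induction arbitrary: c rule: pres_eq.induct)
  case (refl w) then show ?case by (simp add: pres_eq.refl tau_words)
next
  case (sym u v) then show ?case by (blast intro: pres_eq.sym)
next
  case (trans u v w) then show ?case by (blast intro: pres_eq.trans)
next
  case (cancel u v g b)
  let ?c = "actw c u"
  have m: "pres_eq AT RT (tau ?c [(g, b), (g, \<not> b)]) []"
  proof (cases b)
    case True
    then show ?thesis using pres_eq_cancel_word[OF th_words[of "(?c, gi g)"], of RT]
      by (simp add: tau_def)
  next
    case False
    then show ?thesis using pres_eq_cancel_word'[OF th_words[of "(act ?c g, gi g)"], of RT]
      by (simp add: tau_def)
  qed
  have e: "tau ?c ((g, b) # (g, \<not> b) # v) = tau ?c [(g, b), (g, \<not> b)] @ tau ?c v"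
    using tau_append[of ?c "[(g, b), (g, \<not> b)]" v] by simp
  show ?case using pres_eq_mid[OF m, of "tau c u" "tau ?c v"] tau_words e by simp
next
  case (relator u v r)
  let ?c = "actw c u"
  have m: "pres_eq AT RT (tau ?c r) []" by (rule tau_rel[OF relator(3)])
  show ?case using pres_eq_mid[OF m, of "tau c u" "tau ?c v"] tau_words
    by (simp add: actw_rel relator(3))
qed

definition psi :: "fvb_gen word set \<Rightarrow> tgt_gen word set" where
  "psi x = cls AT RT (tau (E0, E0) (SOME w. w \<in> x))"

lemma psi_cls: "w \<in> words A3 \<Longrightarrow> psi (cls A3 R3 w) = cls AT RT (tau (E0, E0) w)"
  unfolding psi_def
  using tau_pres_eq[OF some_cls[of w A3 R3], of "(E0, E0)"]
  by (subst cls_eq_iff) (auto simp: tau_words intro: pres_eq.sym)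


section \<open>Kernel characterisation\<close>

lemma group_FV: "group FV" by (simp add: FV_def' group_PG)
lemma group_TT: "group TT" by (simp add: TT_def' group_PG)

lemma pg_resp:
  assumes "\<forall>g\<in>A. m g \<in> words A" "\<forall>r\<in>R. r \<in> words A \<longrightarrow> pres_eq A R (substw m r) []"
  shows "resp (presented_group A R) (\<lambda>g. cls A R (m g)) A R"
  unfolding resp_def
proof (intro conjI ballI impI)
  fix g assume "g \<in> A" then show "cls A R (m g) \<in> carrier (presented_group A R)"
    using assms(1) by (simp add: cls_carrier)
next
  fix r assume r: "r \<in> R" "r \<in> words A"
  have sw: "substw m r \<in> words A" using assms(1) r(2)
    by (intro substw_words) (auto simp: words_def)
  have "eval_word (presented_group A R) (\<lambda>g. cls A R (m g)) r = cls A R (substw m r)"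
    using assms(1) r(2) by (intro eval_cls_subst) (auto simp: words_def)
  then show "eval_word (presented_group A R) (\<lambda>g. cls A R (m g)) r = \<one>\<^bsub>presented_group A R\<^esub>"
    using assms(2) r sw by (simp add: one_PG cls_eq_iff)
qed

lemma pg_lift_cls:
  assumes "\<forall>g\<in>A. m g \<in> words A" "\<forall>r\<in>R. r \<in> words A \<longrightarrow> pres_eq A R (substw m r) []"
    "w \<in> words A"
  shows "pres_lift (presented_group A R) (\<lambda>g. cls A R (m g)) (cls A R w) = cls A R (substw m w)"
proof -
  have "eval_word (presented_group A R) (\<lambda>g. cls A R (m g)) w = cls A R (substw m w)"
    using assms(1,3) by (intro eval_cls_subst) (auto simp: words_def)
  then show ?thesis
    using group.pres_lift_cls[OF group_PG pg_resp[OF assms(1,2)] assms(3)] by simp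
qed

lemma pi_eq: "fvb_pi 3 = pres_lift FV (\<lambda>g. cls A3 R3 (mS g))"
proof -
  have f: "(\<lambda>g. case g of Sig i \<Rightarrow> pres_class A3 R3 (gen (Sig i)) | Rho i \<Rightarrow> pres_class A3 R3 (gen (Sig i)))
     = (\<lambda>g. cls A3 R3 (mS g))" by (rule ext, case_tac g) (simp_all add: mS_def gen_def)
  show ?thesis unfolding fvb_pi_def using f by simp
qed

lemma nu_eq: "fvb_nu 3 = pres_lift FV (\<lambda>g. cls A3 R3 (mN g))"
proof -
  have f: "(\<lambda>g. case g of Sig i \<Rightarrow> \<one>\<^bsub>FV\<^esub> | Rho i \<Rightarrow> pres_class A3 R3 (gen (Rho i)))
     = (\<lambda>g. cls A3 R3 (mN g))" by (rule ext, case_tac g) (simp_all add: mN_def gen_def FV_def' one_PG)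
  show ?thesis unfolding fvb_nu_def using f by simp
qed

lemma mS_words: "g \<in> A3 \<Longrightarrow> mS g \<in> words A3"
  by (auto simp: A3_eq gensL_def mS_def)
lemma mN_words: "g \<in> A3 \<Longrightarrow> mN g \<in> words A3"
  by (auto simp: A3_eq gensL_def mN_def)

lemma mSN_rel: assumes "r \<in> R3" shows "pres_eq A3 R3 (substw (if k then mS else mN) r) []"
proof -
  obtain j where j: "j < 7" "r = R3L ! j" using assms R3L_len by (auto simp: R3_eq in_set_conv_nth)
  have ch: "freered (substw (if k then mS else mN) r) =
       freered (prodcert (map (\<lambda>(w, i, s). (w, R3L ! i, s)) (lk cpitab (k, j)))) \<and>
     list_all (\<lambda>(w, i, s). Fw w \<and> i < 7) (lk cpitab (k, j))"
  proof -
    have k: "k \<in> set [True, False]" by (cases k) auto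
    have "\<forall>k\<in>set [True, False]. \<forall>j\<in>set [0,1,2,3,4,5,6]. freered (substw (if k then mS else mN) (R3L ! j)) =
       freered (prodcert (map (\<lambda>(w, i, s). (w, R3L ! i, s)) (lk cpitab (k, j)))) \<and>
     list_all (\<lambda>(w, i, s). Fw w \<and> i < 7) (lk cpitab (k, j))"
      using chkPI unfolding chkPI_def list_all_iff .
    from this[THEN bspec, OF k, THEN bspec, OF set7[OF j(1)]] show ?thesis using j(2) by simp
  qed
  have rw: "r \<in> words A3" using assms R3L_words R3_eq by auto
  show ?thesis
  proof (rule pg_cert[OF _ _ conjunct1[OF ch]])
    show "substw (if k then mS else mN) r \<in> words A3"
    proof (rule substw_words)
      fix x assume "x \<in> fst ` set r" then have "x \<in> A3" using rw by (auto simp: words_def)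
      then show "(if k then mS else mN) x \<in> words A3" by (cases k) (simp_all add: mS_words mN_words)
    qed
    show "\<forall>(w, r, s)\<in>set (map (\<lambda>(w, i, s). (w, R3L ! i, s)) (lk cpitab (k, j))). w \<in> words A3 \<and> r \<in> R3 \<and> r \<in> words A3"
      using conjunct2[OF ch] R3L_len by (auto simp: list_all_iff Fw_words R3_eq R3L_words)
  qed
qed

lemma mS_ok: "\<forall>g\<in>A3. mS g \<in> words A3" "\<forall>r\<in>R3. r \<in> words A3 \<longrightarrow> pres_eq A3 R3 (substw mS r) []"
  using mS_words mSN_rel[of _ True] by auto
lemma mN_ok: "\<forall>g\<in>A3. mN g \<in> words A3" "\<forall>r\<in>R3. r \<in> words A3 \<longrightarrow> pres_eq A3 R3 (substw mN r) []"
  using mN_words mSN_rel[of _ False] by auto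

lemma pi_cls: "w \<in> words A3 \<Longrightarrow> fvb_pi 3 (cls A3 R3 w) = cls A3 R3 (substw mS w)"
  unfolding pi_eq FV_def' by (rule pg_lift_cls[OF mS_ok])
lemma nu_cls: "w \<in> words A3 \<Longrightarrow> fvb_nu 3 (cls A3 R3 w) = cls A3 R3 (substw mN w)"
  unfolding nu_eq FV_def' by (rule pg_lift_cls[OF mN_ok])
lemma pi_hom: "fvb_pi 3 \<in> hom FV FV"
  unfolding pi_eq FV_def' by (rule group.pres_lift_hom[OF group_PG pg_resp[OF mS_ok]])
lemma nu_hom: "fvb_nu 3 \<in> hom FV FV"
  unfolding nu_eq FV_def' by (rule group.pres_lift_hom[OF group_PG pg_resp[OF mN_ok]])


definition pk :: "bool \<Rightarrow> s3 \<times> s3 \<Rightarrow> s3" where "pk k c = (if k then fst c else snd c)"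
definition Lk :: "bool \<Rightarrow> nat \<Rightarrow> fvb_gen" where "Lk k i = (if k then Sig i else Rho i)"

lemma all_s3: "p \<in> set [E0, E1, E2, E3, E4, E5]" by (cases p) auto

lemma pk_act: "i = 1 \<or> i = 2 \<Longrightarrow> pk k (act c (Lk k i)) = m3 (pk k c) (sg i)"
  by (cases c, cases k) (auto simp: pk_def Lk_def act_def act4_def gi_def)

lemma pk_act_dep: "pk k c = pk k c' \<Longrightarrow> pk k (act c g) = pk k (act c' g)"
  by (cases c, cases c', cases k; cases "gi g") (auto simp: pk_def act_def act4_def)

lemma pk_actw_dep: "pk k c = pk k c' \<Longrightarrow> pk k (actw c w) = pk k (actw c' w)"
proof (induction w arbitrary: c c')
  case (Cons x w)
  have h: "pk k (act c (fst x)) = pk k (act c' (fst x))" by (rule pk_act_dep[OF Cons.prems])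
  show ?case using Cons.IH[OF h] by simp
qed simp

lemma nfw_words: "nfw k p \<in> words A3"
  by (cases k; cases p) (auto simp: nfw_def nfL_def A3_eq gensL_def)

lemma nfw_pk: "pk k (actw (E0, E0) (nfw k p)) = p"
  by (cases k; cases p) (simp_all add: nfw_def nfL_def pk_def act_def act4_def gi_def m3_def sg_def)

lemma nfw_E0: "nfw k E0 = []" by (simp add: nfw_def nfL_def)

lemma nf_step:
  assumes i: "i = 1 \<or> i = 2"
  shows "pres_eq A3 R3 (nfw k p @ [(Lk k i, b)]) (nfw k (m3 p (sg i)))"
proof -
  have i': "i \<in> set [1, 2::nat]" using i by auto
  have ch: "freered (nfw k p @ [(if k then Sig i else Rho i, b)] @ winv (nfw k (m3 p (sg i)))) =
       freered (prodcert (map (\<lambda>(w, i, s). (w, R3L ! i, s)) (lk cnftab (k, p, i, b)))) \<and>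
     list_all (\<lambda>(w, i, s). Fw w \<and> i < 7) (lk cnftab (k, p, i, b))"
  proof -
    have k: "k \<in> set [True, False]" by (cases k) auto
    have b: "b \<in> set [True, False]" by (cases b) auto
    have "\<forall>k\<in>set [True, False]. \<forall>p\<in>set [E0, E1, E2, E3, E4, E5]. \<forall>i\<in>set [1, 2]. \<forall>b\<in>set [True, False].
      freered (nfw k p @ [(if k then Sig i else Rho i, b)] @ winv (nfw k (m3 p (sg i)))) =
       freered (prodcert (map (\<lambda>(w, i, s). (w, R3L ! i, s)) (lk cnftab (k, p, i, b)))) \<and>
     list_all (\<lambda>(w, i, s). Fw w \<and> i < 7) (lk cnftab (k, p, i, b))"
      using chkNF unfolding chkNF_def list_all_iff .
    from this[THEN bspec, OF k, THEN bspec, OF all_s3[of p], THEN bspec, OF i', THEN bspec, OF b]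
    show ?thesis .
  qed
  have lw: "[(Lk k i, b)] \<in> words A3" using i by (cases k) (auto simp: Lk_def A3_eq gensL_def)
  have "pres_eq A3 R3 ((nfw k p @ [(Lk k i, b)]) @ winv (nfw k (m3 p (sg i)))) []"
  proof (rule pg_cert)
    show "(nfw k p @ [(Lk k i, b)]) @ winv (nfw k (m3 p (sg i))) \<in> words A3"
      using lw nfw_words by simp
    show "\<forall>(w, r, s)\<in>set (map (\<lambda>(w, i, s). (w, R3L ! i, s)) (lk cnftab (k, p, i, b))). w \<in> words A3 \<and> r \<in> R3 \<and> r \<in> words A3"
      using conjunct2[OF ch] R3L_len by (auto simp: list_all_iff Fw_words R3_eq R3L_words)
    show "freered ((nfw k p @ [(Lk k i, b)]) @ winv (nfw k (m3 p (sg i)))) =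
        freered (prodcert (map (\<lambda>(w, i, s). (w, R3L ! i, s)) (lk cnftab (k, p, i, b))))"
      using conjunct1[OF ch] by (simp add: Lk_def)
  qed
  then show ?thesis by (rule pres_eq_from_triv) (use lw nfw_words in simp_all)
qed

lemma nf_cls:
  assumes "\<forall>x\<in>set v. fst x = Lk k 1 \<or> fst x = Lk k 2"
  shows "cls A3 R3 v = cls A3 R3 (nfw k (pk k (actw (E0, E0) v)))"
  using assms
proof (induction v rule: rev_induct)
  case Nil then show ?case by (simp add: pk_def nfw_E0)
next
  case (snoc x v)
  obtain g b where x: "x = (g, b)" by fastforce
  obtain i where i: "i = 1 \<or> i = 2" "g = Lk k i" using snoc.prems x by auto
  have vw: "v \<in> words A3" using snoc.prems by (cases k) (auto simp: words_def Lk_def A3_eq gensL_def)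
  have xw: "[x] \<in> words A3" using i x by (cases k) (auto simp: Lk_def A3_eq gensL_def)
  let ?p = "pk k (actw (E0, E0) v)"
  have "cls A3 R3 (v @ [x]) = cls A3 R3 v \<otimes>\<^bsub>presented_group A3 R3\<^esub> cls A3 R3 [x]"
    using vw xw by (simp add: mult_PG)
  also have "\<dots> = cls A3 R3 (nfw k ?p @ [x])"
    using snoc vw xw nfw_words by (simp add: mult_PG)
  also have "\<dots> = cls A3 R3 (nfw k (m3 ?p (sg i)))"
    using nf_step[OF i(1), of k ?p b] x i xw nfw_words by (simp add: cls_eq_iff)
  also have "m3 ?p (sg i) = pk k (actw (E0, E0) (v @ [x]))"
    using pk_act[OF i(1), of k "actw (E0, E0) v"] x i by simp
  finally show ?case .
qed

lemma pk_subst: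
  assumes "w \<in> words A3"
  shows "pk k (actw c (substw (if k then mS else mN) w)) = pk k (actw c w)"
  using assms
proof (induction w arbitrary: c)
  case Nil then show ?case by simp
next
  case (Cons x w)
  obtain g b where x: "x = (g, b)" by fastforce
  have g: "g \<in> A3" "w \<in> words A3" using Cons.prems x by auto
  have "pk k (actw c (substw (if k then mS else mN) [(g, b)])) = pk k (act c g)"
  proof -
    have "g = Sig 1 \<or> g = Sig 2 \<or> g = Rho 1 \<or> g = Rho 2" using g(1) by (simp add: A3_eq gensL_def)
    moreover obtain p q where c: "c = (p, q)" by fastforce
    ultimately show ?thesis
      by (cases k; cases b; elim disjE) (simp_all add: mS_def mN_def pk_def act_def act4_def gi_def)
  qed
  then have h2: "pk k (actw (actw c (substw (if k then mS else mN) [(g, b)])) (substw (if k then mS else mN) w))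
       = pk k (actw (act c g) (substw (if k then mS else mN) w))"
    by (rule pk_actw_dep)
  have e: "substw (if k then mS else mN) (x # w) = substw (if k then mS else mN) [(g, b)] @ substw (if k then mS else mN) w"
    using x by simp
  have "pk k (actw c (substw (if k then mS else mN) (x # w))) =
     pk k (actw (actw c (substw (if k then mS else mN) [(g, b)])) (substw (if k then mS else mN) w))"
    by (simp only: e actw_append)
  also have "\<dots> = pk k (actw (act c g) (substw (if k then mS else mN) w))" by (rule h2)
  also have "\<dots> = pk k (actw (act c g) w)" by (rule Cons.IH[OF g(2)])
  also have "\<dots> = pk k (actw c (x # w))" using x by simp
  finally show ?case .
qed

lemma fst_substw: "fst ` set (substw m w) \<subseteq> (\<Union>y\<in>set w. fst ` set (m (fst y)))"
proof (induction w)
  case (Cons y w)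
  obtain g b where y: "y = (g, b)" by fastforce
  have "fst ` set (winv (m g)) = fst ` set (m g)" by (force simp: winv_def)
  then show ?case using Cons y by auto
qed simp

lemma subst_Lk: "w \<in> words A3 \<Longrightarrow> \<forall>x\<in>set (substw (if k then mS else mN) w). fst x = Lk k 1 \<or> fst x = Lk k 2"
proof
  fix x assume w: "w \<in> words A3" and x: "x \<in> set (substw (if k then mS else mN) w)"
  then obtain y where y: "y \<in> set w" "fst x \<in> fst ` set ((if k then mS else mN) (fst y))"
    using fst_substw[of "if k then mS else mN" w] by blast
  have "fst y \<in> A3" using w y(1) by (auto simp: words_def)
  then have "fst y \<in> {Sig 1, Sig 2, Rho 1, Rho 2}" by (simp add: A3_eq gensL_def)
  then show "fst x = Lk k 1 \<or> fst x = Lk k 2" using y(2)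
    by (cases k) (auto simp: mS_def mN_def Lk_def)
qed

lemma pinu_triv:
  assumes w: "w \<in> words A3"
  shows "(cls A3 R3 (substw (if k then mS else mN) w) = cls A3 R3 []) = (pk k (actw (E0, E0) w) = E0)"
proof -
  let ?v = "substw (if k then mS else mN) w"
  have vw: "?v \<in> words A3"
  proof (rule substw_words)
    fix x assume "x \<in> fst ` set w" then have "x \<in> A3" using w by (auto simp: words_def)
    then show "(if k then mS else mN) x \<in> words A3" by (cases k) (auto simp: mS_words mN_words)
  qed
  have e: "cls A3 R3 ?v = cls A3 R3 (nfw k (pk k (actw (E0, E0) w)))"
    using nf_cls[OF subst_Lk[OF w]] pk_subst[OF w] by simp
  show ?thesis
  proof
    assume "cls A3 R3 ?v = cls A3 R3 []"
    then have "pres_eq A3 R3 (nfw k (pk k (actw (E0, E0) w))) []"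
      using e nfw_words by (simp add: cls_eq_iff)
    then have "actw (E0, E0) (nfw k (pk k (actw (E0, E0) w))) = actw (E0, E0) []"
      by (rule actw_pres_eq)
    then show "pk k (actw (E0, E0) w) = E0" using nfw_pk[of k "pk k (actw (E0, E0) w)"]
      by (simp add: pk_def split: if_splits)
  next
    assume "pk k (actw (E0, E0) w) = E0"
    then show "cls A3 R3 ?v = cls A3 R3 []" using e by (simp add: nfw_E0)
  qed
qed

lemma carrier_FV: "carrier FV = cls A3 R3 ` words A3" by (simp add: FV_def' carrier_PG)
lemma one_FV: "\<one>\<^bsub>FV\<^esub> = cls A3 R3 []" by (simp add: FV_def' one_PG)

lemma X3_char: "FVP 3 \<inter> FVK 3 = cls A3 R3 ` {w \<in> words A3. actw (E0, E0) w = (E0, E0)}"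
proof -
  have pi1: "w \<in> words A3 \<Longrightarrow> (fvb_pi 3 (cls A3 R3 w) = \<one>\<^bsub>FV\<^esub>) = (fst (actw (E0, E0) w) = E0)" for w
    using pinu_triv[of w True] by (simp add: pi_cls one_FV pk_def)
  have nu1: "w \<in> words A3 \<Longrightarrow> (fvb_nu 3 (cls A3 R3 w) = \<one>\<^bsub>FV\<^esub>) = (snd (actw (E0, E0) w) = E0)" for w
    using pinu_triv[of w False] by (simp add: nu_cls one_FV pk_def)
  have eq: "x \<in> FVP 3 \<inter> FVK 3 \<longleftrightarrow> x \<in> cls A3 R3 ` {w \<in> words A3. actw (E0, E0) w = (E0, E0)}" for x
  proof
    assume x: "x \<in> FVP 3 \<inter> FVK 3"
    then have xc: "x \<in> carrier FV" and p: "fvb_pi 3 x = \<one>\<^bsub>FV\<^esub>" and n: "fvb_nu 3 x = \<one>\<^bsub>FV\<^esub>"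
      by (simp_all add: FVP_def FVK_def kernel_def)
    obtain w where w: "w \<in> words A3" "x = cls A3 R3 w" using xc by (auto simp: carrier_FV)
    have "actw (E0, E0) w = (E0, E0)" using pi1[OF w(1)] nu1[OF w(1)] p n w(2) by (simp add: prod_eq_iff)
    then show "x \<in> cls A3 R3 ` {w \<in> words A3. actw (E0, E0) w = (E0, E0)}" using w by blast
  next
    assume "x \<in> cls A3 R3 ` {w \<in> words A3. actw (E0, E0) w = (E0, E0)}"
    then obtain w where w: "w \<in> words A3" "x = cls A3 R3 w" "actw (E0, E0) w = (E0, E0)" by blast
    have xc: "x \<in> carrier FV" using w by (simp add: carrier_FV)
    have "fvb_pi 3 x = \<one>\<^bsub>FV\<^esub>" "fvb_nu 3 x = \<one>\<^bsub>FV\<^esub>"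
      using pi1[OF w(1)] nu1[OF w(1)] w by simp_all
    then show "x \<in> FVP 3 \<inter> FVK 3" using xc by (simp add: FVP_def FVK_def kernel_def)
  qed
  show ?thesis by (rule Set.set_eqI[OF eq])
qed


section \<open>Reidemeister-Schreier\<close>

abbreviation "PF \<equiv> presented_group A3 R3"
abbreviation "PT \<equiv> presented_group AT RT"

lemma trchk: "Fw (tr c) \<and> actw (E0, E0) (tr c) = c \<and> tau (E0, E0) (tr c) = [] \<and> tau c (winv (tr c)) = []"
  using chkTr cosL_all[of c] unfolding chkTr_def list_all_iff by blast

lemma tr_words: "tr c \<in> words A3" using trchk Fw_words by blast
lemma tr_act: "actw (E0, E0) (tr c) = c" using trchk by blast
lemma tau_tr: "tau (E0, E0) (tr c) = []" using trchk by blast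
lemma tau_tr_inv: "tau c (winv (tr c)) = []" using trchk by blast
lemma tr0: "tr (E0, E0) = []" by (simp add: tr_def)

definition Sw :: "sym \<Rightarrow> fvb_gen word" where
  "Sw s = (case s of (c, h) \<Rightarrow> tr c @ [(ig h, True)] @ winv (tr (act c (ig h))))"
definition Sf :: "sym \<Rightarrow> fvb_gen word set" where "Sf s = cls A3 R3 (Sw s)"

lemma Sw_words: "Sw s \<in> words A3" by (cases s) (simp add: Sw_def tr_words)
lemma Sf_carrier[simp]: "Sf s \<in> carrier PF" by (simp add: Sf_def Sw_words cls_carrier)
lemma letok_Sf[simp]: "letok PF Sf w" by (simp add: letok_def Sf_carrier)

interpretation PFg: group PF by (rule group_PG)
interpretation PTg: group PT by (rule group_PG)

lemma cls_cancel_mid: "x \<in> words A3 \<Longrightarrow> t \<in> words A3 \<Longrightarrow> y \<in> words A3 \<Longrightarrow>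
  cls A3 R3 (x @ winv t @ t @ y) = cls A3 R3 (x @ y)"
  using pres_eq_mid[OF pres_eq_cancel_word'[of t A3 R3], of x y] by (simp add: cls_eq_iff)

lemma tele: "w \<in> words A3 \<Longrightarrow> eval_word PF Sf (rho c w) = cls A3 R3 (tr c @ w @ winv (tr (actw c w)))"
proof (induction w arbitrary: c)
  case Nil
  have "cls A3 R3 (tr c @ winv (tr c)) = cls A3 R3 []"
    using pres_eq_cancel_word[OF tr_words[of c], of R3] by (simp add: cls_eq_iff tr_words)
  then show ?case by (simp add: one_PG)
next
  case (Cons x w)
  obtain g b where x: "x = (g, b)" by fastforce
  have g: "g \<in> A3" "w \<in> words A3" using Cons.prems x by auto
  let ?c1 = "act c g"
  have IH: "eval_word PF Sf (rho ?c1 w) = cls A3 R3 (tr ?c1 @ w @ winv (tr (actw ?c1 w)))"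
    by (rule Cons.IH[OF g(2)])
  have L: "(if b then Sf (c, gi g) else inv\<^bsub>PF\<^esub> (Sf (?c1, gi g))) =
     cls A3 R3 (tr c @ [(g, b)] @ winv (tr ?c1))"
  proof (cases b)
    case True then show ?thesis by (simp add: Sf_def Sw_def ig_gi[OF g(1)])
  next
    case False
    have "inv\<^bsub>PF\<^esub> (Sf (?c1, gi g)) = cls A3 R3 (winv (Sw (?c1, gi g)))"
      by (simp add: Sf_def inv_PG Sw_words)
    then show ?thesis using False by (simp add: Sw_def ig_gi[OF g(1)])
  qed
  have "eval_word PF Sf (rho c (x # w)) =
      (if b then Sf (c, gi g) else inv\<^bsub>PF\<^esub> (Sf (?c1, gi g))) \<otimes>\<^bsub>PF\<^esub> eval_word PF Sf (rho ?c1 w)"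
    using x by (cases b) (simp_all add: eval_Cons)
  also have "\<dots> = cls A3 R3 ((tr c @ [(g, b)]) @ winv (tr ?c1) @ tr ?c1 @ (w @ winv (tr (actw ?c1 w))))"
    unfolding L IH using g by (simp add: mult_PG tr_words)
  also have "\<dots> = cls A3 R3 ((tr c @ [(g, b)]) @ (w @ winv (tr (actw ?c1 w))))"
    using g by (intro cls_cancel_mid) (auto simp: tr_words)
  finally show ?case using x by simp
qed

lemma eval_rel: "r \<in> R3 \<Longrightarrow> eval_word PF Sf (rho c r) = \<one>\<^bsub>PF\<^esub>"
proof -
  assume r: "r \<in> R3"
  have rw: "r \<in> words A3" using r R3L_words R3_eq by auto
  have "eval_word PF Sf (rho c r) = cls A3 R3 (tr c @ r @ winv (tr c))"
    using tele[OF rw, of c] actw_rel[OF r] by simp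
  also have "\<dots> = cls A3 R3 (tr c @ winv (tr c))"
    using pres_eq.relator[of "tr c" A3 "winv (tr c)" r R3] r rw by (simp add: cls_eq_iff tr_words)
  also have "\<dots> = cls A3 R3 []"
    using pres_eq_cancel_word[OF tr_words[of c], of R3] by (simp add: cls_eq_iff tr_words)
  finally show ?thesis by (simp add: one_PG)
qed

lemma eval_subst_Q:
  assumes "\<forall>x\<in>set u. Sf (fst x) = eval_word PF Sf (Qs (fst x))"
  shows "eval_word PF Sf (substw Qs u) = eval_word PF Sf u"
  using PFg.eval_substw[where w=u and m=Qs and f=Sf] eval_cong[of u "\<lambda>x. eval_word PF Sf (Qs x)" Sf PF] assms
  by simp

lemma symchk_s: "symchk s" using chkSym symL_all[of s] unfolding chkSym_def list_all_iff by blast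

lemma P_all: "Sf s = eval_word PF Sf (Qs s)"
proof (induction "rank s" arbitrary: s rule: less_induct)
  case less
  obtain c h where s: "s = (c, h)" by fastforce
  have sc: "symchk s" by (rule symchk_s)
  show ?case
  proof (cases "kindS s = 0")
    case True
    then have t: "th s = []" "tr (act c (ig h)) = tr c @ [(ig h, True)]"
      using sc s by (auto simp: symchk_def)
    have "Sf s = cls A3 R3 ((tr c @ [(ig h, True)]) @ winv (tr c @ [(ig h, True)]))"
      using s t by (simp add: Sf_def Sw_def)
    also have "\<dots> = cls A3 R3 []"
      using pres_eq_cancel_word[of "tr c @ [(ig h, True)]" A3 R3] by (simp add: cls_eq_iff tr_words)
    finally show ?thesis using t by (simp add: Qs_def one_PG)
  next
    case False
    show ?thesis
    proof (cases "kindS s = 1")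
      case True
      then have "freered (Qs s) = [(s, True)]" using sc s False by (auto simp: symchk_def)
      then have "eval_word PF Sf (Qs s) = eval_word PF Sf [(s, True)]"
        using PFg.eval_freered[of Sf "Qs s"] by simp
      then show ?thesis by (simp add: eval_Cons Sf_carrier)
    next
      case False2: False
      then have st: "stepchk s" using sc s False by (auto simp: symchk_def)
      obtain c' j k where so: "stepOf s = (c', j, k)" by (cases "stepOf s") auto
      define w where "w = rho c' (R3L ! j)"
      define u where "u = take k w"
      define v where "v = drop (Suc k) w"
      have raw: "j < 7 \<and> k < length w \<and> fst (w ! k) = s \<and>
        (\<forall>x\<in>set (u @ v). rank (fst x) < rank s) \<and>
        freered (if snd (w ! k) then Qs s else winv (Qs s)) =
           freered (winv (substw Qs u) @ winv (substw Qs v))"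
        using st so unfolding stepchk_def w_def u_def v_def list_all_iff Let_def by simp
      then have j: "j < 7" and k: "k < length w" and wk: "fst (w ! k) = s"
        and rk: "\<forall>x\<in>set (u @ v). rank (fst x) < rank s"
        and fr: "freered (if snd (w ! k) then Qs s else winv (Qs s)) =
           freered (winv (substw Qs u) @ winv (substw Qs v))" by blast+
      obtain b where b: "w ! k = (s, b)" using wk by (cases "w ! k") auto
      have wsplit: "w = u @ [(s, b)] @ v" using id_take_nth_drop[OF k] b by (simp add: u_def v_def)
      have Pu: "\<forall>x\<in>set u. Sf (fst x) = eval_word PF Sf (Qs (fst x))"
        "\<forall>x\<in>set v. Sf (fst x) = eval_word PF Sf (Qs (fst x))"
        using rk less by auto
      have "eval_word PF Sf w = \<one>\<^bsub>PF\<^esub>"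
        unfolding w_def by (rule eval_rel) (use j R3L_len R3_eq in auto)
      moreover have "eval_word PF Sf (u @ [(s, b)] @ v) =
          eval_word PF Sf u \<otimes>\<^bsub>PF\<^esub> (eval_word PF Sf [(s, b)] \<otimes>\<^bsub>PF\<^esub> eval_word PF Sf v)"
        using PFg.eval_append[of Sf u "[(s, b)] @ v"] PFg.eval_append[of Sf "[(s, b)]" v] Sf_carrier[of s] by simp
      ultimately have "eval_word PF Sf u \<otimes>\<^bsub>PF\<^esub> eval_word PF Sf [(s, b)] \<otimes>\<^bsub>PF\<^esub> eval_word PF Sf v = \<one>\<^bsub>PF\<^esub>"
        unfolding wsplit
        using PFg.m_assoc[of "eval_word PF Sf u" "eval_word PF Sf [(s, b)]" "eval_word PF Sf v"]
          PFg.eval_closed[OF letok_Sf, of "[(s, b)]"] by simp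
      then have e1: "eval_word PF Sf [(s, b)] =
          inv\<^bsub>PF\<^esub> (eval_word PF Sf u) \<otimes>\<^bsub>PF\<^esub> inv\<^bsub>PF\<^esub> (eval_word PF Sf v)"
        by (intro PFg.solve_mid) auto
      also have "\<dots> = eval_word PF Sf (winv (substw Qs u) @ winv (substw Qs v))"
        using eval_subst_Q[OF Pu(1)] eval_subst_Q[OF Pu(2)] by (simp add: PFg.eval_append PFg.eval_winv)
      also have "\<dots> = eval_word PF Sf (freered (winv (substw Qs u) @ winv (substw Qs v)))"
        by (rule PFg.eval_freered[symmetric]) simp
      also have "\<dots> = eval_word PF Sf (freered (if b then Qs s else winv (Qs s)))"
        using fr b by simp
      also have "\<dots> = eval_word PF Sf (if b then Qs s else winv (Qs s))"
        by (rule PFg.eval_freered) simp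
      finally have e2: "eval_word PF Sf [(s, b)] = eval_word PF Sf (if b then Qs s else winv (Qs s))" .
      show ?thesis
      proof (cases b)
        case True then show ?thesis using e2 by (simp add: eval_Cons Sf_carrier)
      next
        case False
        then have "inv\<^bsub>PF\<^esub> (Sf s) = inv\<^bsub>PF\<^esub> (eval_word PF Sf (Qs s))"
          using e2 by (simp add: eval_Cons Sf_carrier PFg.eval_winv)
        then have "inv\<^bsub>PF\<^esub> (inv\<^bsub>PF\<^esub> (Sf s)) = inv\<^bsub>PF\<^esub> (inv\<^bsub>PF\<^esub> (eval_word PF Sf (Qs s)))"
          by simp
        then show ?thesis by (simp add: PFg.inv_inv)
      qed
    qed
  qed
qed


definition phigen :: "tgt_gen \<Rightarrow> fvb_gen word set" where
  "phigen a = eval_word PF Sf (kap a)"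
definition phi :: "tgt_gen word set \<Rightarrow> fvb_gen word set" where
  "phi = pres_lift PF phigen"

lemma phigen_carrier[simp]: "phigen a \<in> carrier PF" by (simp add: phigen_def)

lemma eval_phigen: "eval_word PF phigen v = eval_word PF Sf (substw kap v)"
  using PFg.eval_substw[where w=v and m=kap and f=Sf] by (simp add: phigen_def[abs_def])

lemma eval_Q_all: "eval_word PF Sf (substw Qs w) = eval_word PF Sf w"
  by (rule eval_subst_Q) (simp add: P_all[symmetric])

lemma eval_kap_tau: "eval_word PF Sf (substw kap (tau c w)) = eval_word PF Sf (rho c w)"
  by (simp add: tau_def substw_substw Qs_def[symmetric, abs_def] eval_Q_all)

lemma phi_resp: "resp PF phigen AT RT"
  unfolding resp_def
proof (intro conjI ballI impI)
  fix r assume r: "r \<in> RT" "r \<in> words AT"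
  obtain i where i: "i < 4" "r = TL ! i" using r(1) TL_len by (auto simp: RT_eq in_set_conv_nth)
  have i': "i \<in> set [0,1,2,3]" using set4[OF i(1)] .
  have "\<forall>i\<in>set [0,1,2,3]. freered (substw kap (TL ! i)) =
      freered (prodcert (map (\<lambda>(w, (c, j), s). (w, substw kap (tau c (R3L ! j)), s)) (lk c6tab i))) \<and>
      list_all (\<lambda>(w, (c, j), s). j < 7) (lk c6tab i)"
    using chkC6 unfolding chkC6_def list_all_iff .
  from this[THEN bspec, OF i'] have ch:
    "freered (substw kap r) =
      freered (prodcert (map (\<lambda>(w, (c, j), s). (w, substw kap (tau c (R3L ! j)), s)) (lk c6tab i)))"
    "list_all (\<lambda>(w, (c, j), s). j < 7) (lk c6tab i)" using i(2) by auto
  have "eval_word PF Sf (substw kap r) = \<one>\<^bsub>PF\<^esub>"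
  proof (rule PFg.cert_trivial[OF _ _ ch(1)])
    show "\<forall>(c, r, s)\<in>set (map (\<lambda>(w, (c, j), s). (w, substw kap (tau c (R3L ! j)), s)) (lk c6tab i)).
        letok PF Sf c \<and> letok PF Sf r \<and> eval_word PF Sf r = \<one>\<^bsub>PF\<^esub>"
    proof (clarsimp)
      fix w c j s assume m: "(w, (c, j), s) \<in> set (lk c6tab i)"
      then have "j < 7" using ch(2) by (auto simp: list_all_iff)
      then have "R3L ! j \<in> R3" using R3L_len by (simp add: R3_eq)
      then show "eval_word PF Sf (substw kap (tau c (R3L ! j))) = \<one>\<^bsub>PF\<^esub>"
        by (simp add: eval_kap_tau eval_rel)
    qed
  qed simp
  then show "eval_word PF phigen r = \<one>\<^bsub>PF\<^esub>" by (simp add: eval_phigen)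
qed simp

lemma phi_hom: "phi \<in> hom PT PF"
  unfolding phi_def by (rule PFg.pres_lift_hom[OF phi_resp])

lemma phi_cls: "v \<in> words AT \<Longrightarrow> phi (cls AT RT v) = eval_word PF phigen v"
  unfolding phi_def by (rule PFg.pres_lift_cls[OF phi_resp])

definition X3 where "X3 = cls A3 R3 ` {w \<in> words A3. actw (E0, E0) w = (E0, E0)}"

lemma X3_eq: "FVP 3 \<inter> FVK 3 = X3" by (simp add: X3_char X3_def)

lemma X3_sub: "subgroup X3 PF"
proof -
  have "subgroup (FVP 3) FV"
    unfolding FVP_def using pi_hom group_FV by (intro group_hom.subgroup_kernel) (simp add: group_hom_def group_hom_axioms_def)
  moreover have "subgroup (FVK 3) FV"
    unfolding FVK_def using nu_hom group_FV by (intro group_hom.subgroup_kernel) (simp add: group_hom_def group_hom_axioms_def)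
  ultimately have "subgroup (FVP 3 \<inter> FVK 3) FV" by (rule group.subgroups_Inter_pair[OF group_FV])
  then show ?thesis by (simp add: X3_eq FV_def')
qed

lemma Sw_act: "actw (E0, E0) (Sw s) = (E0, E0)"
proof -
  obtain c h where s: "s = (c, h)" by fastforce
  let ?d = "act c (ig h)"
  show ?thesis using actw_winv[of "(E0, E0)" "tr ?d"] tr_act[of ?d] tr_act[of c] s by (simp add: Sw_def)
qed

lemma Sf_X3: "Sf s \<in> X3" unfolding Sf_def X3_def using Sw_words Sw_act by blast

lemma phi_X3: "y \<in> carrier PT \<Longrightarrow> phi y \<in> X3"
proof -
  assume "y \<in> carrier PT"
  then obtain v where v: "v \<in> words AT" "y = cls AT RT v" by (auto simp: carrier_PG)
  have pg: "phigen a \<in> X3" for a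
    unfolding phigen_def by (rule PFg.eval_in_subgroup[OF X3_sub]) (simp add: Sf_X3)
  have "eval_word PF phigen v \<in> X3" by (rule PFg.eval_in_subgroup[OF X3_sub]) (simp add: pg)
  then show ?thesis using v phi_cls by simp
qed

lemma phi_psi: "x \<in> X3 \<Longrightarrow> phi (psi x) = x"
proof -
  assume "x \<in> X3"
  then obtain w where w: "w \<in> words A3" "x = cls A3 R3 w" "actw (E0, E0) w = (E0, E0)"
    by (auto simp: X3_def)
  have "phi (psi x) = eval_word PF phigen (tau (E0, E0) w)"
    using w by (simp add: psi_cls phi_cls tau_words)
  also have "\<dots> = eval_word PF Sf (rho (E0, E0) w)"
    by (simp add: eval_phigen eval_kap_tau)
  also have "\<dots> = x" using tele[OF w(1), of "(E0, E0)"] w by (simp add: tr0)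
  finally show ?thesis .
qed

lemma tau_Sw: "tau (E0, E0) (substw Sw r) = substw th r \<and> actw (E0, E0) (substw Sw r) = (E0, E0)"
proof (induction r)
  case Nil then show ?case by (simp add: tau_def)
next
  case (Cons x r)
  obtain s b where x: "x = (s, b)" by fastforce
  obtain c h where s: "s = (c, h)" by fastforce
  let ?d = "act c (ig h)"
  have t1: "tau (E0, E0) (Sw s) = th s"
    using tau_tr[of c] tau_tr_inv[of ?d] s tr_act[of c] by (simp add: Sw_def tau_def)
  have t2: "tau (E0, E0) (winv (Sw s)) = winv (th s)"
    using tau_tr[of ?d] tau_tr_inv[of c] s tr_act[of ?d] by (simp add: Sw_def tau_def)
  have a1: "actw (E0, E0) (Sw s) = (E0, E0)" by (rule Sw_act)
  have a2: "actw (E0, E0) (winv (Sw s)) = (E0, E0)"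
    using actw_winv[of "(E0, E0)" "Sw s"] a1 by simp
  show ?case using Cons x t1 t2 a1 a2 by (cases b) simp_all
qed

lemma c5: assumes a: "a \<in> AT" shows "pres_eq AT RT (substw th (kap a)) [(a, True)]"
proof -
  have a': "a \<in> set TgensL" using a AT_eq by simp
  have "\<forall>a\<in>set TgensL. freered (substw th (kap a) @ [(a, False)]) =
      freered (prodcert (map (\<lambda>(w, i, s). (w, TL ! i, s)) (lk c5tab a))) \<and>
      list_all (\<lambda>(w, i, s). Tw w \<and> i < 4) (lk c5tab a)"
    using chkC5 unfolding chkC5_def list_all_iff .
  from this[THEN bspec, OF a'] have ch:
    "freered (substw th (kap a) @ winv [(a, True)]) = freered (prodcert (map (\<lambda>(w, i, s). (w, TL ! i, s)) (lk c5tab a)))"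
    "list_all (\<lambda>(w, i, s). Tw w \<and> i < 4) (lk c5tab a)" by simp_all
  have "pres_eq AT RT (substw th (kap a) @ winv [(a, True)]) []"
  proof (rule pg_cert[OF _ _ ch(1)])
    show "substw th (kap a) @ winv [(a, True)] \<in> words AT" using a substw_th_words by simp
    show "\<forall>(w, r, s)\<in>set (map (\<lambda>(w, i, s). (w, TL ! i, s)) (lk c5tab a)). w \<in> words AT \<and> r \<in> RT \<and> r \<in> words AT"
      using ch(2) TL_len by (auto simp: list_all_iff Tw_words RT_eq TL_words)
  qed
  moreover have "[(a, True)] \<in> words AT" using a by simp
  ultimately show ?thesis using pres_eq_from_triv substw_th_words by blast
qed

lemma psi_phi: "y \<in> carrier PT \<Longrightarrow> psi (phi y) = y"
proof -
  assume "y \<in> carrier PT"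
  then obtain v where v: "v \<in> words AT" "y = cls AT RT v" by (auto simp: carrier_PG)
  have "phi y = eval_word PF Sf (substw kap v)" using v by (simp add: phi_cls eval_phigen)
  also have "\<dots> = cls A3 R3 (substw Sw (substw kap v))"
    unfolding Sf_def[abs_def] by (rule eval_cls_subst) (simp add: Sw_words)
  finally have e: "phi y = cls A3 R3 (substw Sw (substw kap v))" .
  have sw: "substw Sw (substw kap v) \<in> words A3" by (rule substw_words) (simp add: Sw_words)
  have "psi (phi y) = cls AT RT (substw th (substw kap v))"
    using e psi_cls[OF sw] tau_Sw by simp
  also have "\<dots> = cls AT RT (substw (\<lambda>a. substw th (kap a)) v)" by (simp add: substw_substw)
  also have "\<dots> = eval_word PT (\<lambda>a. cls AT RT (substw th (kap a))) v"
    by (rule eval_cls_subst[symmetric]) (simp add: substw_th_words)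
  also have "\<dots> = eval_word PT (\<lambda>a. cls AT RT (gen a)) v"
  proof (rule eval_cong)
    fix x assume "x \<in> set v"
    then have "fst x \<in> AT" using v(1) by (auto simp: words_def)
    then show "cls AT RT (substw th (kap (fst x))) = cls AT RT (gen (fst x))"
      using c5 substw_th_words by (simp add: cls_eq_iff gen_def)
  qed
  also have "\<dots> = y" using v by (simp add: eval_cls_gen)
  finally show ?thesis .
qed

lemma psi_hom: "psi \<in> hom (PF\<lparr>carrier := X3\<rparr>) PT"
proof (rule homI)
  fix x assume "x \<in> carrier (PF\<lparr>carrier := X3\<rparr>)"
  then obtain w where "w \<in> words A3" "x = cls A3 R3 w" by (auto simp: X3_def)
  then show "psi x \<in> carrier PT" by (simp add: psi_cls tau_words cls_carrier)
next
  fix x y assume "x \<in> carrier (PF\<lparr>carrier := X3\<rparr>)" "y \<in> carrier (PF\<lparr>carrier := X3\<rparr>)"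
  then obtain u v where uv: "u \<in> words A3" "x = cls A3 R3 u" "actw (E0, E0) u = (E0, E0)"
    "v \<in> words A3" "y = cls A3 R3 v" by (auto simp: X3_def)
  then show "psi (x \<otimes>\<^bsub>PF\<lparr>carrier := X3\<rparr>\<^esub> y) = psi x \<otimes>\<^bsub>PT\<^esub> psi y"
    by (simp add: mult_PG psi_cls tau_words)
qed

lemma carrier_X3: "carrier (PF\<lparr>carrier := X3\<rparr>) = X3" by simp

lemma psi_iso: "psi \<in> iso (PF\<lparr>carrier := X3\<rparr>) PT"
proof (rule isoI[OF psi_hom])
  have inj: "inj_on psi X3"
  proof (rule inj_onI)
    fix x y assume "x \<in> X3" "y \<in> X3" "psi x = psi y"
    then show "x = y" using phi_psi[of x] phi_psi[of y] by metis
  qed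
  have im1: "psi ` X3 \<subseteq> carrier PT"
    using hom_carrier[OF psi_hom] unfolding carrier_X3 .
  have im2: "carrier PT \<subseteq> psi ` X3"
  proof
    fix y assume y: "y \<in> carrier PT"
    have "y = psi (phi y)" using psi_phi[OF y] by simp
    moreover have "phi y \<in> X3" using phi_X3[OF y] .
    ultimately show "y \<in> psi ` X3" by (rule image_eqI)
  qed
  show "bij_betw psi (carrier (PF\<lparr>carrier := X3\<rparr>)) (carrier PT)"
    unfolding carrier_X3 bij_betw_def using inj im1 im2 by blast
qed

theorem mainTheorem3:
  shows "(FVB 3)\<lparr>carrier := FVP 3 \<inter> FVK 3\<rparr> \<cong> Z2_F3_Gamma"
proof -
  have "PF\<lparr>carrier := X3\<rparr> \<cong> PT" by (rule is_isoI[OF psi_iso])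
  moreover have "(FVB 3)\<lparr>carrier := FVP 3 \<inter> FVK 3\<rparr> = PF\<lparr>carrier := X3\<rparr>"
    by (simp only: X3_eq FV_def')
  moreover have "Z2_F3_Gamma = PT" by (rule TT_def')
  ultimately show ?thesis by simp
qed


end
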